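(* Let $n\geq 1$ and $k\ge 2$, and let $u$ be a word over $\Sigma_k$ of length at most $n$. Then $B_k(u,n)$ can be computed in $O(n^2)$ time using $O(n)$ space, under the unit-cost RAM model.
   Context: $\Sigma_k=\{1,2,\ldots,k\}$. A border of a word $w$ is a word that is both a non-empty proper prefix and a non-empty proper suffix of $w$; $w$ is bordered if it has a border. $B_k(u,n)$ denotes the number of length-$n$ bordered words over $\Sigma_k$ having $u$ as a prefix. Unit-cost RAM model: integer variables use constant space and integer arithmetic operations take constant time. *)

theory Defs
  imports Main "HOL-Library.Sublist"
begin

definition bordered :: "nat list \<Rightarrow> bool" where
  "bordered w \<longleftrightarrow> (\<exists>v. v \<noteq> [] \<and> length v < length w \<and> prefix v w \<and> suffix v w)"

definition B :: "nat \<Rightarrow> nat list \<Rightarrow> nat \<Rightarrow> nat" where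
  "B k u n = card {w. length w = n \<and> set w \<subseteq> {1..k} \<and> prefix u w \<and> bordered w}"

text \<open>Registers are indexed by natural numbers and hold unbounded integers.
  Every instruction costs one time unit; arithmetic on arbitrary integers is unit cost.\<close>

datatype instr =
    Const nat int
  | Add nat nat nat
  | Sub nat nat nat
  | Mul nat nat nat
  | Div nat nat nat
  | Mod nat nat nat
  | Load nat nat
  | Store nat nat
  | Jz nat nat
  | Jneg nat nat

type_synonym config = "nat \<times> (nat \<Rightarrow> int)"

fun exec :: "instr \<Rightarrow> config \<Rightarrow> config" where
  "exec (Const r v) (pc, m) = (Suc pc, m(r := v))"
| "exec (Add r a b) (pc, m) = (Suc pc, m(r := m a + m b))"
| "exec (Sub r a b) (pc, m) = (Suc pc, m(r := m a - m b))"
| "exec (Mul r a b) (pc, m) = (Suc pc, m(r := m a * m b))"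
| "exec (Div r a b) (pc, m) = (Suc pc, m(r := m a div m b))"
| "exec (Mod r a b) (pc, m) = (Suc pc, m(r := m a mod m b))"
| "exec (Load r a) (pc, m) = (Suc pc, m(r := m (nat (m a))))"
| "exec (Store a b) (pc, m) = (Suc pc, m(nat (m a) := m b))"
| "exec (Jz r l) (pc, m) = ((if m r = 0 then l else Suc pc), m)"
| "exec (Jneg r l) (pc, m) = ((if m r < 0 then l else Suc pc), m)"

definition step :: "instr list \<Rightarrow> config \<Rightarrow> config" where
  "step P c = (if fst c < length P then exec (P ! fst c) c else c)"

definition run :: "instr list \<Rightarrow> nat \<Rightarrow> config \<Rightarrow> config" where
  "run P t c = (step P ^^ t) c"

definition halted :: "instr list \<Rightarrow> config \<Rightarrow> bool" where
  "halted P c \<longleftrightarrow> length P \<le> fst c"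

text \<open>Input encoding: M[0] = k, M[1] = n, M[2] = |u|, M[3+i] = u_i, all other cells 0;
  execution starts at pc 0. Output: M[0] on halting.\<close>

definition init :: "nat \<Rightarrow> nat \<Rightarrow> nat list \<Rightarrow> config" where
  "init k n u = (0, \<lambda>a. if a = 0 then int k else if a = 1 then int n
                        else if a = 2 then int (length u)
                        else if 3 \<le> a \<and> a < 3 + length u then int (u ! (a - 3)) else 0)"

end

theory Submission
  imports Defs
begin


lemma prefix_iff_take: "prefix v w \<longleftrightarrow> take (length v) w = v"
  unfolding prefix_def by (metis append_take_drop_id append_eq_conv_conj)

lemma suffix_iff_drop: "suffix v w \<longleftrightarrow> drop (length w - length v) w = v"
proof
  assume "suffix v w" then obtain zs where "w = zs @ v" unfolding suffix_def by blast
  then show "drop (length w - length v) w = v" by simp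
next
  assume h: "drop (length w - length v) w = v"
  have "w = take (length w - length v) w @ drop (length w - length v) w" by simp
  then show "suffix v w" unfolding suffix_def using h by metis
qed

lemma bordered_iff: "bordered w \<longleftrightarrow> (\<exists>r. 0 < r \<and> r < length w \<and> take r w = drop (length w - r) w)"
proof
  assume "bordered w"
  then obtain v where v: "v \<noteq> []" "length v < length w" "take (length v) w = v" "drop (length w - length v) w = v"
    unfolding bordered_def prefix_iff_take suffix_iff_drop by blast
  then show "\<exists>r. 0 < r \<and> r < length w \<and> take r w = drop (length w - r) w"
    by (intro exI[of _ "length v"]) auto
next
  assume "\<exists>r. 0 < r \<and> r < length w \<and> take r w = drop (length w - r) w"
  then obtain r where r: "0 < r" "r < length w" "take r w = drop (length w - r) w" by blast
  show "bordered w" unfolding bordered_def prefix_iff_take suffix_iff_drop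
    using r by (intro exI[of _ "take r w"]) (auto simp: min_def)
qed

lemma take_drop_eq_iff:
  assumes "r \<le> length w"
  shows "take r w = drop (length w - r) w \<longleftrightarrow> (\<forall>i<r. w!i = w!(length w - r + i))"
  using assms by (auto simp: list_eq_iff_nth_eq min_def)


definition brd :: "nat \<Rightarrow> nat list \<Rightarrow> bool" where
  "brd r w \<longleftrightarrow> 0 < r \<and> r < length w \<and> (\<forall>i<r. w!i = w!(length w - r + i))"

lemma bordered_brd: "bordered w \<longleftrightarrow> (\<exists>r. brd r w)"
  unfolding bordered_iff brd_def using take_drop_eq_iff
  by (metis less_imp_le_nat)

definition bd :: "nat \<Rightarrow> nat list \<Rightarrow> bool" where
  "bd l w \<longleftrightarrow> 1 \<le> l \<and> 2*l \<le> length w \<and> \<not> bordered (take l w) \<and> (\<forall>i<l. w!i = w!(length w - l + i))"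

lemma brd_take:
  assumes "brd r w" "brd s (take r w)"
  shows "brd s w"
proof -
  have sr: "0 < s" "s < r" "r < length w" using assms unfolding brd_def by auto
  have A: "\<forall>i<r. w!i = w!(length w - r + i)" using assms unfolding brd_def by auto
  have B: "\<forall>i<s. w!i = w!(r - s + i)" using assms sr unfolding brd_def by auto
  have "\<forall>i<s. w!i = w!(length w - s + i)"
  proof (intro allI impI)
    fix i assume i: "i < s"
    have "w!i = w!(r - s + i)" using B i by auto
    also have "\<dots> = w!(length w - r + (r - s + i))" using A i sr by auto
    also have "length w - r + (r - s + i) = length w - s + i" using sr i by auto
    finally show "w!i = w!(length w - s + i)" .
  qed
  then show ?thesis using sr unfolding brd_def by auto
qed

lemma brd_double:
  assumes "brd r w" "length w < 2*r"
  shows "brd (2*r - length w) w"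
proof -
  let ?m = "length w" let ?d = "length w - r"
  have r: "0 < r" "r < ?m" and A: "\<forall>i<r. w!i = w!(?d + i)" using assms unfolding brd_def by auto
  have "\<forall>i<2*r - ?m. w!i = w!(?m - (2*r - ?m) + i)"
  proof (intro allI impI)
    fix i assume i: "i < 2*r - ?m"
    have ir: "i < r" "?d + i < r" using i r by auto
    have "w!i = w!(?d + i)" using A ir by blast
    also have "\<dots> = w!(?d + (?d + i))" using A ir by blast
    also have "?d + (?d + i) = ?m - (2*r - ?m) + i" using i r assms by auto
    finally show "w!i = w!(?m - (2*r - ?m) + i)" .
  qed
  then show ?thesis using r assms unfolding brd_def by auto
qed

lemma bordered_imp_bd:
  assumes "bordered w" shows "\<exists>l. bd l w"
proof -
  define r where "r = (LEAST r. brd r w)"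
  have ex: "\<exists>r. brd r w" using assms bordered_brd by blast
  have br: "brd r w" unfolding r_def using ex by (metis LeastI)
  have min: "\<And>s. brd s w \<Longrightarrow> r \<le> s" unfolding r_def by (rule Least_le)
  have r: "0 < r" "r < length w" and A: "\<forall>i<r. w!i = w!(length w - r + i)" using br unfolding brd_def by auto
  have "2*r \<le> length w"
  proof (rule ccontr)
    assume "\<not> 2*r \<le> length w"
    then have "brd (2*r - length w) w" using brd_double br by auto
    then have "r \<le> 2*r - length w" using min by blast
    then show False using r by auto
  qed
  moreover have "\<not> bordered (take r w)"
  proof
    assume "bordered (take r w)"
    then obtain s where s: "brd s (take r w)" using bordered_brd by blast
    then have "brd s w" using brd_take br by blast
    then have "r \<le> s" using min by blast
    moreover have "s < r" using s r unfolding brd_def by auto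
    ultimately show False by simp
  qed
  ultimately have "bd r w" using r A unfolding bd_def by auto
  then show ?thesis by blast
qed

lemma bd_imp_bordered: "bd l w \<Longrightarrow> bordered w"
  unfolding bd_def bordered_brd brd_def by (intro exI[of _ l]) auto

lemma bd_unique_aux:
  assumes "bd l1 w" "bd l2 w" "l1 < l2" shows False
proof -
  have "brd l1 (take l2 w)"
    unfolding brd_def
  proof (intro conjI allI impI)
    show "0 < l1" using assms unfolding bd_def by auto
    show "l1 < length (take l2 w)" using assms unfolding bd_def by auto
    fix i assume i: "i < l1"
    have L: "length (take l2 w) = l2" using assms unfolding bd_def by auto
    have "take l2 w ! i = w ! i" using i assms by auto
    also have "\<dots> = w ! (length w - l1 + i)" using assms(1) i unfolding bd_def by auto
    also have "\<dots> = w ! (length w - l2 + (l2 - l1 + i))"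
      using assms i unfolding bd_def by (auto intro: arg_cong[where f="(!) w"])
    also have "\<dots> = w ! (l2 - l1 + i)" using assms(2) i assms(3) unfolding bd_def by auto
    also have "\<dots> = take l2 w ! (l2 - l1 + i)" using i assms(3) by auto
    finally show "take l2 w ! i = take l2 w ! (length (take l2 w) - l1 + i)" using L by simp
  qed
  then have "bordered (take l2 w)" using bordered_brd by blast
  then show False using assms(2) unfolding bd_def by auto
qed

lemma bd_unique: "bd l1 w \<Longrightarrow> bd l2 w \<Longrightarrow> l1 = l2"
  using bd_unique_aux by (metis linorder_neqE_nat)


definition words :: "nat \<Rightarrow> nat \<Rightarrow> nat list set" where
  "words k L = {w. length w = L \<and> set w \<subseteq> {1..k}}"

lemma finite_words: "finite (words k L)"
proof -
  have "words k L = {xs. set xs \<subseteq> {1..k} \<and> length xs = L}" unfolding words_def by auto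
  then show ?thesis using finite_lists_length_eq[of "{1..k}" L] by simp
qed

lemma card_words: "card (words k L) = k^L"
proof -
  have "words k L = {xs. set xs \<subseteq> {1..k} \<and> length xs = L}" unfolding words_def by auto
  then show ?thesis using card_lists_length_eq[of "{1..k}" L] by simp
qed

lemma card_words_prefix:
  assumes "length r \<le> L" "set r \<subseteq> {1..k}"
  shows "card {x \<in> words k L. prefix r x} = k^(L - length r)"
proof -
  have "{x \<in> words k L. prefix r x} = (\<lambda>y. r @ y) ` words k (L - length r)"
  proof (intro set_eqI iffI)
    fix x assume "x \<in> {x \<in> words k L. prefix r x}"
    then have x: "length x = L" "set x \<subseteq> {1..k}" "prefix r x" unfolding words_def by auto
    then obtain y where y: "x = r @ y" unfolding prefix_def by blast
    then have "y \<in> words k (L - length r)" using x unfolding words_def by auto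
    then show "x \<in> (\<lambda>y. r @ y) ` words k (L - length r)" using y by blast
  next
    fix x assume "x \<in> (\<lambda>y. r @ y) ` words k (L - length r)"
    then obtain y where "x = r @ y" "y \<in> words k (L - length r)" by blast
    then show "x \<in> {x \<in> words k L. prefix r x}" using assms unfolding words_def by auto
  qed
  moreover have "inj_on (\<lambda>y. r @ y) (words k (L - length r))" by (rule inj_onI) simp
  ultimately show ?thesis using card_words card_image by metis
qed

definition Vset :: "nat \<Rightarrow> nat list \<Rightarrow> nat \<Rightarrow> nat list set" where
  "Vset k u l = {v \<in> words k l. \<not> bordered v \<and> (prefix u v \<or> prefix v u)}"

definition Wn :: "nat \<Rightarrow> nat list \<Rightarrow> nat \<Rightarrow> nat" where
  "Wn k u l = card (Vset k u l)"

definition Bset :: "nat \<Rightarrow> nat list \<Rightarrow> nat \<Rightarrow> nat list set" where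
  "Bset k u m = {w \<in> words k m. prefix (take m u) w \<and> bordered w}"

definition gn :: "nat \<Rightarrow> nat list \<Rightarrow> nat \<Rightarrow> nat \<Rightarrow> nat" where
  "gn k u l m = (let q = min (length u) m in
     if q \<le> l then k^(m-2*l) else if q \<le> m-l then k^(m-l-q)
     else if (\<forall>i<q-(m-l). u!i = u!(m-l+i)) then 1 else 0)"

lemma compat_take:
  assumes "length v = l" "l \<le> m" "prefix (take m u) (v @ y)"
  shows "prefix u v \<or> prefix v u"
proof -
  have "prefix v (v @ y)" by simp
  then have "prefix (take m u) v \<or> prefix v (take m u)" using assms(3) prefix_same_cases by blast
  then show ?thesis
  proof
    assume "prefix v (take m u)"
    then show ?thesis using take_is_prefix prefix_order.trans by blast
  next
    assume h: "prefix (take m u) v"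
    show ?thesis
    proof (cases "length u \<le> m")
      case True then show ?thesis using h by simp
    next
      case False
      then have "length (take m u) = m" by simp
      then have "take m v = take m u" using h unfolding prefix_iff_take by simp
      then have "v = take m u" using assms by simp
      then show ?thesis using take_is_prefix by blast
    qed
  qed
qed


context
  fixes k :: nat and u :: "nat list" and m l :: nat
  assumes uk: "set u \<subseteq> {1..k}" and l1: "1 \<le> l" and lm: "2*l \<le> m"
begin

definition Xset :: "nat list \<Rightarrow> nat list set" where
  "Xset v = {x \<in> words k (m - 2*l). prefix (take m u) (v @ x @ v)}"

definition Aset :: "nat list set" where
  "Aset = {w \<in> words k m. prefix (take m u) w \<and> bd l w}"

lemma Aset_eq: "Aset = (\<lambda>(v,x). v @ x @ v) ` (SIGMA v:Vset k u l. Xset v)"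
proof (intro set_eqI iffI)
  fix w assume "w \<in> Aset"
  then have w: "length w = m" "set w \<subseteq> {1..k}" "prefix (take m u) w" "bd l w"
    unfolding Aset_def words_def by auto
  define v where "v = take l w"
  define x where "x = take (m - 2*l) (drop l w)"
  have idx: "\<forall>i<l. w!i = w!(length w - l + i)" using w unfolding bd_def by auto
  have llw: "l \<le> length w" using w lm by simp
  have "take l w = drop (length w - l) w" using take_drop_eq_iff[OF llw] idx by blast
  then have dv: "drop (m - l) w = v" using w v_def by simp
  have "w = take l w @ drop l w" by simp
  also have "drop l w = take (m - 2*l) (drop l w) @ drop (m - 2*l) (drop l w)" by (rule append_take_drop_id[symmetric])
  also have "drop (m - 2*l) (drop l w) = drop (m - l) w" using lm by (simp add: add.commute)
  finally have weq: "w = v @ x @ v" unfolding dv v_def x_def .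
  have lv: "length v = l" using w lm v_def by simp
  have "v \<in> Vset k u l"
    unfolding Vset_def words_def
  proof (intro CollectI conjI)
    show "length v = l" by (rule lv)
    show "set v \<subseteq> {1..k}" using w(2) unfolding v_def by (meson order_trans set_take_subset)
    show "\<not> bordered v" using w(4) unfolding v_def bd_def by blast
    have "prefix (take m u) (v @ (x @ v))" using w(3) unfolding weq[symmetric] .
    moreover have "l \<le> m" using lm by simp
    ultimately show "prefix u v \<or> prefix v u" using compat_take[OF lv] by blast
  qed
  moreover have "x \<in> Xset v"
    unfolding Xset_def words_def
  proof (intro CollectI conjI)
    show "length x = m - 2*l" using w lm x_def by simp
    have "set x \<subseteq> set (drop l w)" unfolding x_def by (rule set_take_subset)
    also have "\<dots> \<subseteq> set w" by (rule set_drop_subset)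
    finally show "set x \<subseteq> {1..k}" using w by blast
    show "prefix (take m u) (v @ x @ v)" using w(3) unfolding weq[symmetric] .
  qed
  ultimately show "w \<in> (\<lambda>(v,x). v @ x @ v) ` (SIGMA v:Vset k u l. Xset v)"
    using weq by (intro image_eqI[where x="(v,x)"]) auto
next
  fix w assume "w \<in> (\<lambda>(v,x). v @ x @ v) ` (SIGMA v:Vset k u l. Xset v)"
  then obtain pr where pr: "pr \<in> (SIGMA v:Vset k u l. Xset v)" "w = (\<lambda>(v,x). v @ x @ v) pr" by (rule imageE)
  obtain v x where "pr = (v,x)" by (cases pr)
  then have vx: "v \<in> Vset k u l" "x \<in> Xset v" "w = v @ x @ v" using pr by auto
  have v: "length v = l" "set v \<subseteq> {1..k}" "\<not> bordered v" using vx unfolding Vset_def words_def by auto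
  have x: "length x = m - 2*l" "set x \<subseteq> {1..k}" "prefix (take m u) (v @ x @ v)"
    using vx unfolding Xset_def words_def by auto
  have lw: "length w = m" using v x vx lm by simp
  have "bd l w" unfolding bd_def
  proof (intro conjI allI impI)
    show "1 \<le> l" by (rule l1)
    show "2*l \<le> length w" using lw lm by simp
    show "\<not> bordered (take l w)" using vx v by simp
    fix i assume i: "i < l"
    have "length w - l + i = length (v @ x) + i" using lw v x lm by simp
    then show "w ! i = w ! (length w - l + i)" using vx i v
      by (simp add: nth_append)
  qed
  then show "w \<in> Aset" unfolding Aset_def words_def using lw v x vx by auto
qed

lemma Aset_inj: "inj_on (\<lambda>(v,x). v @ x @ v) (SIGMA v:Vset k u l. Xset v)"
proof (rule inj_onI, clarify)
  fix v x v' x'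
  assume "v \<in> Vset k u l" "x \<in> Xset v" "v' \<in> Vset k u l" "x' \<in> Xset v'" "v @ x @ v = v' @ x' @ v'"
  then have "length v = length v'" "v @ (x @ v) = v' @ (x' @ v')" unfolding Vset_def words_def by auto
  then have "v = v' \<and> x @ v = x' @ v'" using append_eq_append_conv[of v v' "x @ v" "x' @ v'"] by simp
  then show "v = v' \<and> x = x'" by auto
qed


lemma take_min_len: "take (min (length u) m) u = take m u"
  by (simp add: min_def)

lemma card_Xset:
  assumes vV: "v \<in> Vset k u l"
  shows "card (Xset v) = gn k u l m"
proof -
  define q where "q = min (length u) m"
  define u' where "u' = take m u"
  have v: "length v = l" "set v \<subseteq> {1..k}" "\<not> bordered v" "prefix u v \<or> prefix v u"
    using vV unfolding Vset_def words_def by auto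
  have lu': "length u' = q" unfolding u'_def q_def by simp
  have lm': "l \<le> m" using lm by simp
  have setu': "set u' \<subseteq> {1..k}" unfolding u'_def using uk by (meson order_trans set_take_subset)
  show ?thesis
  proof (cases "q \<le> l")
    case True
    have "prefix u' v"
      using v(4)
    proof
      assume "prefix u v" then show "prefix u' v" unfolding u'_def using take_is_prefix prefix_order.trans by blast
    next
      assume "prefix v u"
      then have vt: "v = take l u" using v(1) unfolding prefix_iff_take by simp
      have "take q v = take q u" unfolding vt using True by (simp add: min_def)
      also have "\<dots> = u'" unfolding q_def u'_def by (rule take_min_len)
      finally show "prefix u' v" unfolding prefix_iff_take using lu' by simp
    qed
    then have "Xset v = words k (m - 2*l)" unfolding Xset_def u'_def[symmetric]
      by (auto intro: prefix_order.trans)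
    then show ?thesis using True unfolding gn_def Let_def q_def[symmetric] by (simp add: card_words)
  next
    case False
    have "\<not> prefix u v"
    proof
      assume "prefix u v" then have "length u \<le> l" using v(1) prefix_length_le by fastforce
      then show False using False unfolding q_def by simp
    qed
    then have "prefix v u" using v(4) by blast
    then have vt: "v = take l u" using v(1) unfolding prefix_iff_take by simp
    define r where "r = drop l u'"
    have u'split: "u' = v @ r" unfolding r_def vt u'_def using lm'
      by (metis append_take_drop_id min.absorb1 take_take)
    have lr: "length r = q - l" unfolding r_def using lu' by simp
    have setr: "set r \<subseteq> {1..k}" unfolding r_def using setu' by (meson order_trans set_drop_subset)
    have X: "Xset v = {x \<in> words k (m - 2*l). prefix r (x @ v)}"
      unfolding Xset_def u'_def[symmetric] u'split by simp
    show ?thesis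
    proof (cases "q \<le> m - l")
      case True
      have "Xset v = {x \<in> words k (m - 2*l). prefix r x}"
        unfolding X
      proof (intro Collect_cong conj_cong refl)
        fix x assume "x \<in> words k (m - 2*l)"
        then have "length r \<le> length x" using lr True unfolding words_def by auto
        then show "prefix r (x @ v) = prefix r x" unfolding prefix_iff_take by simp
      qed
      then have "card (Xset v) = k^(m - 2*l - (q - l))"
        using card_words_prefix[of r "m - 2*l" k] lr True setr by simp
      also have "m - 2*l - (q - l) = m - l - q" using True False by simp
      finally show ?thesis using True False unfolding gn_def Let_def q_def[symmetric] by simp
    next
      case False2: False
      define t where "t = q - (m - l)"
      have tl: "t \<le> l" "t \<le> q" unfolding t_def using lu' u'_def q_def by auto
      have lr2: "length r - (m - 2*l) = t" using lr False2 lm unfolding t_def by simp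
      have Xeq: "\<And>x. x \<in> words k (m - 2*l) \<Longrightarrow> prefix r (x @ v) \<longleftrightarrow> (x = take (m - 2*l) r \<and> take t u = drop (m - l) u')"
      proof -
        fix x assume "x \<in> words k (m - 2*l)"
        then have lx: "length x = m - 2*l" unfolding words_def by simp
        have "prefix r (x @ v) \<longleftrightarrow> x @ take t v = r"
          unfolding prefix_iff_take using lx lr2 False2 lr by (simp add: take_append)
        also have "\<dots> \<longleftrightarrow> x = take (m - 2*l) r \<and> take t v = drop (m - 2*l) r"
          using lx by (simp add: append_eq_conv_conj)
        also have "take t v = take t u" unfolding vt using tl by (simp add: min_def)
        also have "drop (m - 2*l) r = drop (m - l) u'" unfolding r_def using lm
          by (simp add: add.commute)
        finally show "prefix r (x @ v) \<longleftrightarrow> (x = take (m - 2*l) r \<and> take t u = drop (m - l) u')" .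
      qed
      have C: "take t u = drop (m - l) u' \<longleftrightarrow> (\<forall>i<q-(m-l). u!i = u!(m-l+i))"
      proof -
        have l1: "length (take t u) = t" using tl lu' unfolding q_def by simp
        have l2: "length (drop (m - l) u') = t" using lu' unfolding t_def by simp
        have n2: "\<And>i. i < t \<Longrightarrow> drop (m - l) u' ! i = u ! (m - l + i)"
          using lu' unfolding u'_def t_def q_def by simp
        show ?thesis using l1 l2 n2 unfolding list_eq_iff_nth_eq t_def[symmetric] by auto
      qed
      have tw: "take (m - 2*l) r \<in> words k (m - 2*l)"
        unfolding words_def using lr False2 setr by (auto dest: in_set_takeD)
      show ?thesis
      proof (cases "take t u = drop (m - l) u'")
        case True
        then have "Xset v = {take (m - 2*l) r}" unfolding X using Xeq tw by blast
        then show ?thesis using True C False False2 unfolding gn_def Let_def q_def[symmetric] by simp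
      next
        case F3: False
        then have "Xset v = {}" unfolding X using Xeq by blast
        then show ?thesis using F3 C False False2 unfolding gn_def Let_def q_def[symmetric] by simp
      qed
    qed
  qed
qed

lemma card_Aset: "card Aset = Wn k u l * gn k u l m"
proof -
  have fV: "finite (Vset k u l)" unfolding Vset_def using finite_words by simp
  have fX: "\<And>v. finite (Xset v)" unfolding Xset_def using finite_words by simp
  have "card Aset = card (SIGMA v:Vset k u l. Xset v)"
    unfolding Aset_eq using Aset_inj by (rule card_image)
  also have "\<dots> = (\<Sum>v\<in>Vset k u l. card (Xset v))" using fV fX by (simp add: card_SigmaI)
  also have "\<dots> = (\<Sum>v\<in>Vset k u l. gn k u l m)" using card_Xset by simp
  finally show ?thesis unfolding Wn_def by simp
qed

end


lemma card_A:
  assumes "set u \<subseteq> {1..k}" "1 \<le> l" "2*l \<le> m"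
  shows "card {w \<in> words k m. prefix (take m u) w \<and> bd l w} = Wn k u l * gn k u l m"
  using card_Aset[OF assms] Aset_def[OF assms] by simp

lemma card_Bset:
  assumes uk: "set u \<subseteq> {1..k}"
  shows "card (Bset k u m) = (\<Sum>l\<in>{1..m div 2}. Wn k u l * gn k u l m)"
proof -
  define A where "A l = {w \<in> words k m. prefix (take m u) w \<and> bd l w}" for l
  have "Bset k u m = (\<Union>l\<in>{1..m div 2}. A l)"
  proof (intro set_eqI iffI)
    fix w assume "w \<in> Bset k u m"
    then have w: "w \<in> words k m" "prefix (take m u) w" "bordered w" unfolding Bset_def by auto
    then obtain l where l: "bd l w" using bordered_imp_bd by blast
    then have "l \<in> {1..m div 2}" using w unfolding bd_def words_def by auto
    then show "w \<in> (\<Union>l\<in>{1..m div 2}. A l)" using w l unfolding A_def by blast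
  next
    fix w assume "w \<in> (\<Union>l\<in>{1..m div 2}. A l)"
    then obtain l where "w \<in> A l" by blast
    then show "w \<in> Bset k u m" unfolding A_def Bset_def using bd_imp_bordered by blast
  qed
  moreover have "card (\<Union>l\<in>{1..m div 2}. A l) = (\<Sum>l\<in>{1..m div 2}. card (A l))"
  proof (rule card_UN_disjoint)
    show "finite {1..m div 2}" by simp
    show "\<forall>i\<in>{1..m div 2}. finite (A i)" unfolding A_def using finite_words by simp
    show "\<forall>i\<in>{1..m div 2}. \<forall>j\<in>{1..m div 2}. i \<noteq> j \<longrightarrow> A i \<inter> A j = {}"
      unfolding A_def using bd_unique by blast
  qed
  moreover have "\<And>l. l \<in> {1..m div 2} \<Longrightarrow> card (A l) = Wn k u l * gn k u l m"
    unfolding A_def using card_A[OF uk] by auto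
  ultimately show ?thesis by simp
qed

lemma Wn_Bset:
  assumes uk: "set u \<subseteq> {1..k}"
  shows "Wn k u m + card (Bset k u m) = k^(m - min (length u) m)"
proof -
  have eq: "\<And>w. w \<in> words k m \<Longrightarrow> (prefix u w \<or> prefix w u) \<longleftrightarrow> prefix (take m u) w"
  proof -
    fix w assume "w \<in> words k m"
    then have lw: "length w = m" unfolding words_def by simp
    show "(prefix u w \<or> prefix w u) \<longleftrightarrow> prefix (take m u) w"
    proof
      assume "prefix u w \<or> prefix w u"
      then show "prefix (take m u) w"
      proof
        assume "prefix u w" then show ?thesis using take_is_prefix prefix_order.trans by blast
      next
        assume "prefix w u" then have "w = take m u" using lw unfolding prefix_iff_take by simp
        then show ?thesis by simp
      qed
    next
      assume "prefix (take m u) w"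
      then show "prefix u w \<or> prefix w u" using compat_take[of w m m u "[]"] lw by simp
    qed
  qed
  have U: "{w \<in> words k m. prefix (take m u) w} = Vset k u m \<union> Bset k u m"
    unfolding Vset_def Bset_def using eq by blast
  have D: "Vset k u m \<inter> Bset k u m = {}" unfolding Vset_def Bset_def by blast
  have fV: "finite (Vset k u m)" unfolding Vset_def using finite_words by simp
  have fB: "finite (Bset k u m)" unfolding Bset_def using finite_words by simp
  have st: "set (take m u) \<subseteq> {1..k}" using uk by (meson order_trans set_take_subset)
  have "card {w \<in> words k m. prefix (take m u) w} = k^(m - length (take m u))"
    by (rule card_words_prefix) (use st in auto)
  then show ?thesis unfolding U Wn_def using card_Un_disjoint[OF fV fB D] by (simp add: min.commute)
qed

lemma B_Bset:
  assumes "length u \<le> n"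
  shows "B k u n = card (Bset k u n)"
  unfolding B_def Bset_def words_def using assms by (simp add: conj_ac)


definition prog :: "instr list" where
  "prog = [
   Add 1 1 1,
   Add 1 1 1,
   Add 1 1 1,
   Add 1 1 1,
   Add 1 1 1,
   Add 1 1 1,
   Const 2 1,
   Add 2 1 2,
   Store 2 0,
   Const 2 3,
   Load 0 2,
   Jz 0 19,
   Add 2 2 1,
   Store 2 0,
   Sub 2 2 1,
   Const 0 1,
   Add 2 2 0,
   Const 0 0,
   Jz 0 10,
   Const 3 0,
   Const 4 1,
   Const 0 3,
   Sub 7 2 0,
   Add 8 1 0,
   Add 0 1 4,
   Load 5 0,
   Const 0 64,
   Div 6 1 0,
   Add 9 8 6,
   Add 9 9 4,
   Add 10 9 6,
   Add 10 10 4,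
   Add 11 10 6,
   Add 11 11 4,
   Const 12 0,
   Const 16 1,
   Add 0 9 12,
   Store 0 16,
   Sub 1 12 6,
   Jz 1 43,
   Mul 16 16 5,
   Add 12 12 4,
   Jz 3 36,
   Const 12 1,
   Sub 0 7 12,
   Sub 0 0 4,
   Jneg 0 66,
   Const 13 0,
   Add 0 12 13,
   Sub 1 7 0,
   Sub 1 1 4,
   Jneg 1 61,
   Add 1 8 13,
   Load 1 1,
   Add 0 8 0,
   Load 0 0,
   Sub 0 0 1,
   Jz 0 59,
   Jz 3 61,
   Add 13 13 4,
   Jz 3 48,
   Add 0 10 12,
   Add 1 12 13,
   Store 0 1,
   Add 12 12 4,
   Jz 3 44,
   Const 12 1,
   Sub 0 6 12,
   Jneg 0 110,
   Add 14 7 3,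
   Sub 0 7 12,
   Sub 0 0 4,
   Jneg 0 74,
   Add 14 12 3,
   Const 15 0,
   Const 13 1,
   Add 0 13 13,
   Sub 0 12 0,
   Jneg 0 102,
   Sub 1 13 14,
   Jneg 1 84,
   Add 0 9 0,
   Load 2 0,
   Jz 3 96,
   Sub 0 12 13,
   Sub 1 0 14,
   Jneg 1 90,
   Add 1 9 1,
   Load 2 1,
   Jz 3 96,
   Add 1 10 0,
   Load 1 1,
   Sub 1 1 14,
   Const 2 0,
   Jneg 1 96,
   Const 2 1,
   Add 0 11 13,
   Load 0 0,
   Mul 0 0 2,
   Add 15 15 0,
   Add 13 13 4,
   Jz 3 76,
   Sub 0 12 14,
   Add 0 9 0,
   Load 0 0,
   Sub 0 0 15,
   Add 1 11 12,
   Store 1 0,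
   Add 12 12 4,
   Jz 3 67,
   Add 0 15 3]"

lemma length_prog [simp]: "length prog = 111"
  by (simp add: prog_def)

lemma prog_0 [simp]: "prog ! 0 = Add 1 1 1"
  by (simp add: prog_def)
lemma prog_1 [simp]: "prog ! 1 = Add 1 1 1"
  by (simp add: prog_def)
lemma prog_2 [simp]: "prog ! 2 = Add 1 1 1"
  by (simp add: prog_def)
lemma prog_3 [simp]: "prog ! 3 = Add 1 1 1"
  by (simp add: prog_def)
lemma prog_4 [simp]: "prog ! 4 = Add 1 1 1"
  by (simp add: prog_def)
lemma prog_5 [simp]: "prog ! 5 = Add 1 1 1"
  by (simp add: prog_def)
lemma prog_6 [simp]: "prog ! 6 = Const 2 1"
  by (simp add: prog_def)
lemma prog_7 [simp]: "prog ! 7 = Add 2 1 2"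
  by (simp add: prog_def)
lemma prog_8 [simp]: "prog ! 8 = Store 2 0"
  by (simp add: prog_def)
lemma prog_9 [simp]: "prog ! 9 = Const 2 3"
  by (simp add: prog_def)
lemma prog_10 [simp]: "prog ! 10 = Load 0 2"
  by (simp add: prog_def)
lemma prog_11 [simp]: "prog ! 11 = Jz 0 19"
  by (simp add: prog_def)
lemma prog_12 [simp]: "prog ! 12 = Add 2 2 1"
  by (simp add: prog_def)
lemma prog_13 [simp]: "prog ! 13 = Store 2 0"
  by (simp add: prog_def)
lemma prog_14 [simp]: "prog ! 14 = Sub 2 2 1"
  by (simp add: prog_def)
lemma prog_15 [simp]: "prog ! 15 = Const 0 1"
  by (simp add: prog_def)
lemma prog_16 [simp]: "prog ! 16 = Add 2 2 0"
  by (simp add: prog_def)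
lemma prog_17 [simp]: "prog ! 17 = Const 0 0"
  by (simp add: prog_def)
lemma prog_18 [simp]: "prog ! 18 = Jz 0 10"
  by (simp add: prog_def)
lemma prog_19 [simp]: "prog ! 19 = Const 3 0"
  by (simp add: prog_def)
lemma prog_20 [simp]: "prog ! 20 = Const 4 1"
  by (simp add: prog_def)
lemma prog_21 [simp]: "prog ! 21 = Const 0 3"
  by (simp add: prog_def)
lemma prog_22 [simp]: "prog ! 22 = Sub 7 2 0"
  by (simp add: prog_def)
lemma prog_23 [simp]: "prog ! 23 = Add 8 1 0"
  by (simp add: prog_def)
lemma prog_24 [simp]: "prog ! 24 = Add 0 1 4"
  by (simp add: prog_def)
lemma prog_25 [simp]: "prog ! 25 = Load 5 0"
  by (simp add: prog_def)
lemma prog_26 [simp]: "prog ! 26 = Const 0 64"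
  by (simp add: prog_def)
lemma prog_27 [simp]: "prog ! 27 = Div 6 1 0"
  by (simp add: prog_def)
lemma prog_28 [simp]: "prog ! 28 = Add 9 8 6"
  by (simp add: prog_def)
lemma prog_29 [simp]: "prog ! 29 = Add 9 9 4"
  by (simp add: prog_def)
lemma prog_30 [simp]: "prog ! 30 = Add 10 9 6"
  by (simp add: prog_def)
lemma prog_31 [simp]: "prog ! 31 = Add 10 10 4"
  by (simp add: prog_def)
lemma prog_32 [simp]: "prog ! 32 = Add 11 10 6"
  by (simp add: prog_def)
lemma prog_33 [simp]: "prog ! 33 = Add 11 11 4"
  by (simp add: prog_def)
lemma prog_34 [simp]: "prog ! 34 = Const 12 0"
  by (simp add: prog_def)
lemma prog_35 [simp]: "prog ! 35 = Const 16 1"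
  by (simp add: prog_def)
lemma prog_36 [simp]: "prog ! 36 = Add 0 9 12"
  by (simp add: prog_def)
lemma prog_37 [simp]: "prog ! 37 = Store 0 16"
  by (simp add: prog_def)
lemma prog_38 [simp]: "prog ! 38 = Sub 1 12 6"
  by (simp add: prog_def)
lemma prog_39 [simp]: "prog ! 39 = Jz 1 43"
  by (simp add: prog_def)
lemma prog_40 [simp]: "prog ! 40 = Mul 16 16 5"
  by (simp add: prog_def)
lemma prog_41 [simp]: "prog ! 41 = Add 12 12 4"
  by (simp add: prog_def)
lemma prog_42 [simp]: "prog ! 42 = Jz 3 36"
  by (simp add: prog_def)
lemma prog_43 [simp]: "prog ! 43 = Const 12 1"
  by (simp add: prog_def)
lemma prog_44 [simp]: "prog ! 44 = Sub 0 7 12"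
  by (simp add: prog_def)
lemma prog_45 [simp]: "prog ! 45 = Sub 0 0 4"
  by (simp add: prog_def)
lemma prog_46 [simp]: "prog ! 46 = Jneg 0 66"
  by (simp add: prog_def)
lemma prog_47 [simp]: "prog ! 47 = Const 13 0"
  by (simp add: prog_def)
lemma prog_48 [simp]: "prog ! 48 = Add 0 12 13"
  by (simp add: prog_def)
lemma prog_49 [simp]: "prog ! 49 = Sub 1 7 0"
  by (simp add: prog_def)
lemma prog_50 [simp]: "prog ! 50 = Sub 1 1 4"
  by (simp add: prog_def)
lemma prog_51 [simp]: "prog ! 51 = Jneg 1 61"
  by (simp add: prog_def)
lemma prog_52 [simp]: "prog ! 52 = Add 1 8 13"
  by (simp add: prog_def)
lemma prog_53 [simp]: "prog ! 53 = Load 1 1"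
  by (simp add: prog_def)
lemma prog_54 [simp]: "prog ! 54 = Add 0 8 0"
  by (simp add: prog_def)
lemma prog_55 [simp]: "prog ! 55 = Load 0 0"
  by (simp add: prog_def)
lemma prog_56 [simp]: "prog ! 56 = Sub 0 0 1"
  by (simp add: prog_def)
lemma prog_57 [simp]: "prog ! 57 = Jz 0 59"
  by (simp add: prog_def)
lemma prog_58 [simp]: "prog ! 58 = Jz 3 61"
  by (simp add: prog_def)
lemma prog_59 [simp]: "prog ! 59 = Add 13 13 4"
  by (simp add: prog_def)
lemma prog_60 [simp]: "prog ! 60 = Jz 3 48"
  by (simp add: prog_def)
lemma prog_61 [simp]: "prog ! 61 = Add 0 10 12"
  by (simp add: prog_def)
lemma prog_62 [simp]: "prog ! 62 = Add 1 12 13"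
  by (simp add: prog_def)
lemma prog_63 [simp]: "prog ! 63 = Store 0 1"
  by (simp add: prog_def)
lemma prog_64 [simp]: "prog ! 64 = Add 12 12 4"
  by (simp add: prog_def)
lemma prog_65 [simp]: "prog ! 65 = Jz 3 44"
  by (simp add: prog_def)
lemma prog_66 [simp]: "prog ! 66 = Const 12 1"
  by (simp add: prog_def)
lemma prog_67 [simp]: "prog ! 67 = Sub 0 6 12"
  by (simp add: prog_def)
lemma prog_68 [simp]: "prog ! 68 = Jneg 0 110"
  by (simp add: prog_def)
lemma prog_69 [simp]: "prog ! 69 = Add 14 7 3"
  by (simp add: prog_def)
lemma prog_70 [simp]: "prog ! 70 = Sub 0 7 12"
  by (simp add: prog_def)
lemma prog_71 [simp]: "prog ! 71 = Sub 0 0 4"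
  by (simp add: prog_def)
lemma prog_72 [simp]: "prog ! 72 = Jneg 0 74"
  by (simp add: prog_def)
lemma prog_73 [simp]: "prog ! 73 = Add 14 12 3"
  by (simp add: prog_def)
lemma prog_74 [simp]: "prog ! 74 = Const 15 0"
  by (simp add: prog_def)
lemma prog_75 [simp]: "prog ! 75 = Const 13 1"
  by (simp add: prog_def)
lemma prog_76 [simp]: "prog ! 76 = Add 0 13 13"
  by (simp add: prog_def)
lemma prog_77 [simp]: "prog ! 77 = Sub 0 12 0"
  by (simp add: prog_def)
lemma prog_78 [simp]: "prog ! 78 = Jneg 0 102"
  by (simp add: prog_def)
lemma prog_79 [simp]: "prog ! 79 = Sub 1 13 14"
  by (simp add: prog_def)
lemma prog_80 [simp]: "prog ! 80 = Jneg 1 84"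
  by (simp add: prog_def)
lemma prog_81 [simp]: "prog ! 81 = Add 0 9 0"
  by (simp add: prog_def)
lemma prog_82 [simp]: "prog ! 82 = Load 2 0"
  by (simp add: prog_def)
lemma prog_83 [simp]: "prog ! 83 = Jz 3 96"
  by (simp add: prog_def)
lemma prog_84 [simp]: "prog ! 84 = Sub 0 12 13"
  by (simp add: prog_def)
lemma prog_85 [simp]: "prog ! 85 = Sub 1 0 14"
  by (simp add: prog_def)
lemma prog_86 [simp]: "prog ! 86 = Jneg 1 90"
  by (simp add: prog_def)
lemma prog_87 [simp]: "prog ! 87 = Add 1 9 1"
  by (simp add: prog_def)
lemma prog_88 [simp]: "prog ! 88 = Load 2 1"
  by (simp add: prog_def)
lemma prog_89 [simp]: "prog ! 89 = Jz 3 96"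
  by (simp add: prog_def)
lemma prog_90 [simp]: "prog ! 90 = Add 1 10 0"
  by (simp add: prog_def)
lemma prog_91 [simp]: "prog ! 91 = Load 1 1"
  by (simp add: prog_def)
lemma prog_92 [simp]: "prog ! 92 = Sub 1 1 14"
  by (simp add: prog_def)
lemma prog_93 [simp]: "prog ! 93 = Const 2 0"
  by (simp add: prog_def)
lemma prog_94 [simp]: "prog ! 94 = Jneg 1 96"
  by (simp add: prog_def)
lemma prog_95 [simp]: "prog ! 95 = Const 2 1"
  by (simp add: prog_def)
lemma prog_96 [simp]: "prog ! 96 = Add 0 11 13"
  by (simp add: prog_def)
lemma prog_97 [simp]: "prog ! 97 = Load 0 0"
  by (simp add: prog_def)
lemma prog_98 [simp]: "prog ! 98 = Mul 0 0 2"
  by (simp add: prog_def)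
lemma prog_99 [simp]: "prog ! 99 = Add 15 15 0"
  by (simp add: prog_def)
lemma prog_100 [simp]: "prog ! 100 = Add 13 13 4"
  by (simp add: prog_def)
lemma prog_101 [simp]: "prog ! 101 = Jz 3 76"
  by (simp add: prog_def)
lemma prog_102 [simp]: "prog ! 102 = Sub 0 12 14"
  by (simp add: prog_def)
lemma prog_103 [simp]: "prog ! 103 = Add 0 9 0"
  by (simp add: prog_def)
lemma prog_104 [simp]: "prog ! 104 = Load 0 0"
  by (simp add: prog_def)
lemma prog_105 [simp]: "prog ! 105 = Sub 0 0 15"
  by (simp add: prog_def)
lemma prog_106 [simp]: "prog ! 106 = Add 1 11 12"
  by (simp add: prog_def)
lemma prog_107 [simp]: "prog ! 107 = Store 1 0"
  by (simp add: prog_def)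
lemma prog_108 [simp]: "prog ! 108 = Add 12 12 4"
  by (simp add: prog_def)
lemma prog_109 [simp]: "prog ! 109 = Jz 3 67"
  by (simp add: prog_def)
lemma prog_110 [simp]: "prog ! 110 = Add 0 15 3"
  by (simp add: prog_def)

lemma step_Suc0 [simp]: "step prog (Suc 0, m) = (2, m(1 := m 1 + m 1))"
  by (simp add: step_def prog_def)

lemma step_simp [simp]: "pc < length prog \<Longrightarrow> step prog (pc, m) = exec (prog ! pc) (pc, m)"
  unfolding step_def by simp

lemma nat_num_int [simp]: "nat (numeral c + int j) = numeral c + j"
  by (metis nat_int of_nat_add of_nat_numeral)
lemma nat_int_num [simp]: "nat (int j + numeral c) = j + numeral c"
  by (metis nat_int of_nat_add of_nat_numeral)
lemma nat_int_int [simp]: "nat (int a + int b) = a + b"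
  by (metis nat_int of_nat_add)
lemma nat_mul_1 [simp]: "nat (numeral c * int n + 1) = numeral c * n + 1"
  by (metis nat_int of_nat_add of_nat_mult of_nat_numeral of_nat_1)

declare nat_add_distrib [simp] nat_mult_distrib [simp]

definition bnd :: "nat \<Rightarrow> (nat \<Rightarrow> int) \<Rightarrow> bool" where
  "bnd n m \<longleftrightarrow> (\<forall>a. 80*n \<le> a \<longrightarrow> m a = 0)"

lemma bnd_upd [simp]: "bnd n m \<Longrightarrow> a < 80*n \<Longrightarrow> bnd n (m(a := v))"
  unfolding bnd_def by auto

definition hoare :: "nat \<Rightarrow> config \<Rightarrow> (config \<Rightarrow> bool) \<Rightarrow> nat \<Rightarrow> bool" where
  "hoare n c Q T \<longleftrightarrow> (\<exists>t\<le>T. Q (run prog t c) \<and> (\<forall>s\<le>t. bnd n (snd (run prog s c))))"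

lemma run_0 [simp]: "run P 0 c = c" unfolding run_def by simp

lemma run_Suc: "run P (Suc t) c = run P t (step P c)"
  unfolding run_def by (simp only: funpow_Suc_right comp_def)

lemma run_add: "run P (t2 + t1) c = run P t2 (run P t1 c)"
  unfolding run_def by (simp add: funpow_add)

lemma H_done: "bnd n (snd c) \<Longrightarrow> Q c \<Longrightarrow> hoare n c Q T"
  unfolding hoare_def by (intro exI[of _ 0]) auto

lemma H_step:
  assumes "bnd n (snd c)" "hoare n (step prog c) Q T"
  shows "hoare n c Q (Suc T)"
proof -
  obtain t where t: "t \<le> T" "Q (run prog t (step prog c))" "\<forall>s\<le>t. bnd n (snd (run prog s (step prog c)))"
    using assms(2) unfolding hoare_def by blast
  have "\<forall>s\<le>Suc t. bnd n (snd (run prog s c))"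
  proof (intro allI impI)
    fix s assume "s \<le> Suc t"
    then show "bnd n (snd (run prog s c))"
      using t(3) assms(1) by (cases s) (auto simp: run_Suc)
  qed
  then show ?thesis unfolding hoare_def using t by (intro exI[of _ "Suc t"]) (auto simp: run_Suc)
qed

lemma H_stepN:
  assumes "0 < T" "bnd n (snd c)" "hoare n (step prog c) Q (T - 1)"
  shows "hoare n c Q T"
  using H_step[OF assms(2,3)] assms(1) by simp

lemma H_seq:
  assumes "hoare n c Q1 T1" "\<And>c'. Q1 c' \<Longrightarrow> bnd n (snd c') \<Longrightarrow> hoare n c' Q2 T2"
  shows "hoare n c Q2 (T1 + T2)"
proof -
  obtain t1 where t1: "t1 \<le> T1" "Q1 (run prog t1 c)" "\<forall>s\<le>t1. bnd n (snd (run prog s c))"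
    using assms(1) unfolding hoare_def by blast
  have "hoare n (run prog t1 c) Q2 T2" using assms(2) t1 by auto
  then obtain t2 where t2: "t2 \<le> T2" "Q2 (run prog t2 (run prog t1 c))"
     "\<forall>s\<le>t2. bnd n (snd (run prog s (run prog t1 c)))"
    unfolding hoare_def by blast
  have "\<forall>s\<le>t2 + t1. bnd n (snd (run prog s c))"
  proof (intro allI impI)
    fix s assume s: "s \<le> t2 + t1"
    show "bnd n (snd (run prog s c))"
    proof (cases "s \<le> t1")
      case True then show ?thesis using t1 by auto
    next
      case False
      then have "s = (s - t1) + t1" by simp
      then have "run prog s c = run prog (s - t1) (run prog t1 c)" using run_add by metis
      then show ?thesis using t2(3) s False by auto
    qed
  qed
  then show ?thesis unfolding hoare_def using t1 t2 run_add[of prog t2 t1 c]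
    by (intro exI[of _ "t2 + t1"]) auto
qed

lemma H_mono:
  assumes "hoare n c Q T" "T \<le> T'" "\<And>c. Q c \<Longrightarrow> Q' c"
  shows "hoare n c Q' T'"
  using assms unfolding hoare_def by (meson order_trans)

lemma H_loop_aux:
  assumes step: "\<And>j c. j < M \<Longrightarrow> I j c \<Longrightarrow> hoare n c (\<lambda>c'. Q c' \<or> I (Suc j) c') T"
    and last: "\<And>c. I M c \<Longrightarrow> hoare n c Q T"
  shows "j \<le> M \<Longrightarrow> I j c \<Longrightarrow> hoare n c Q ((Suc M - j) * T)"
proof (induction "M - j" arbitrary: j c)
  case 0
  then have "j = M" by simp
  then show ?case using last 0 by simp
next
  case (Suc x)
  then have jM: "j < M" by simp
  have "hoare n c Q (T + (Suc M - Suc j) * T)"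
  proof (rule H_seq[OF step[OF jM Suc.prems(2)]])
    fix c' assume A: "Q c' \<or> I (Suc j) c'" and B: "bnd n (snd c')"
    from A show "hoare n c' Q ((Suc M - Suc j) * T)"
    proof
      assume "Q c'" then show ?thesis using B by (rule H_done[rotated])
    next
      assume "I (Suc j) c'"
      moreover have "x = M - Suc j" using Suc.hyps(2) by simp
      moreover have "Suc j \<le> M" using jM by simp
      ultimately show ?thesis using Suc.hyps(1) by blast
    qed
  qed
  moreover have "T + (Suc M - Suc j) * T = (Suc M - j) * T"
  proof -
    have "Suc M - j = Suc (M - j)" using jM by simp
    then show ?thesis by simp
  qed
  ultimately show ?case by simp
qed

lemma H_loop:
  assumes "\<And>j c. j < M \<Longrightarrow> I j c \<Longrightarrow> hoare n c (\<lambda>c'. Q c' \<or> I (Suc j) c') T"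
    and "\<And>c. I M c \<Longrightarrow> hoare n c Q T" and "I 0 c"
  shows "hoare n c Q (Suc M * T)"
proof -
  have "hoare n c Q ((Suc M - 0) * T)"
    by (rule H_loop_aux[where M=M and I=I and Q=Q and T=T and n=n]) (use assms in auto)
  then show ?thesis by simp
qed


definition BU :: "nat \<Rightarrow> nat" where "BU n = 64*n+3"
definition BP :: "nat \<Rightarrow> nat" where "BP n = 65*n+4"
definition BE :: "nat \<Rightarrow> nat" where "BE n = 66*n+5"
definition BW :: "nat \<Rightarrow> nat" where "BW n = 67*n+6"

locale ctx =
  fixes k n :: nat and u :: "nat list"
  assumes n1: "1 \<le> n" and k2: "2 \<le> k" and un: "length u \<le> n" and uk: "set u \<subseteq> {1..k}"
begin

definition CI :: "nat \<Rightarrow> (nat \<Rightarrow> int) \<Rightarrow> bool" where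
  "CI j m \<longleftrightarrow> m 1 = int (64*n) \<and> m 2 = int (3+j) \<and> m (64*n+1) = int k \<and>
     (\<forall>i<length u. m (3+i) = int (u!i)) \<and> m (3 + length u) = 0 \<and>
     (\<forall>i<j. m (64*n+3+i) = int (u!i)) \<and> bnd n m"

lemma bnd_init: "bnd n (snd (init k n u))"
  using un n1 unfolding bnd_def init_def by auto

lemma setup1: "hoare n (init k n u) (\<lambda>c. fst c = 10 \<and> CI 0 (snd c)) 10"
  using bnd_init n1 un unfolding init_def
  apply simp
  apply (rule H_stepN, simp, simp, simp)+
  apply (rule H_done)
   apply simp
  apply (auto simp: CI_def bnd_def)
  done

lemma setup_loop:
  assumes "CI 0 m"
  shows "hoare n (10, m) (\<lambda>c. fst c = 19 \<and> CI (length u) (snd c)) (Suc (length u) * 9)"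
proof (rule H_loop[where I="\<lambda>j c. fst c = 10 \<and> CI j (snd c)"])
  show "fst (10, m) = 10 \<and> CI 0 (snd (10, m))" using assms by simp
next
  fix j and c :: config assume j: "j < length u" and I: "fst c = 10 \<and> CI j (snd c)"
  obtain m where c: "c = (10, m)" using I by (cases c) auto
  have CI: "CI j m" using I c by simp
  have f: "m 2 = int (3+j)" "m (3+j) = int (u!j)" "m 1 = int (64*n)" "bnd n m" "u!j \<noteq> 0" "j < n"
    using CI j uk un unfolding CI_def apply auto
    using nth_mem by fastforce
  have "hoare n (10, m) (\<lambda>c'. fst c' = 10 \<and> CI (Suc j) (snd c')) 9"
    using f
    apply -
    apply (rule H_stepN, simp, simp, simp)+
    apply (rule H_done)
     apply simp
    using CI j un unfolding CI_def by (auto simp: less_Suc_eq)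
  then show "hoare n c (\<lambda>c'. (fst c' = 19 \<and> CI (length u) (snd c')) \<or> (fst c' = 10 \<and> CI (Suc j) (snd c'))) 9"
    unfolding c by (rule H_mono) auto
next
  fix c :: config assume I: "fst c = 10 \<and> CI (length u) (snd c)"
  obtain m where c: "c = (10, m)" using I by (cases c) auto
  have CI: "CI (length u) m" using I c by simp
  have f: "m 2 = int (3 + length u)" "m (3 + length u) = 0" "bnd n m"
    using CI unfolding CI_def by auto
  have "hoare n (10, m) (\<lambda>c. fst c = 19 \<and> CI (length u) (snd c)) 2"
    using f CI n1
    apply -
    apply (rule H_stepN, simp, simp, simp)+
    apply (rule H_done)
     apply simp
    apply (simp add: CI_def)
    done
  then show "hoare n c (\<lambda>c. fst c = 19 \<and> CI (length u) (snd c)) 9"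
    unfolding c by (rule H_mono) auto
qed


definition G :: "(nat \<Rightarrow> int) \<Rightarrow> bool" where
  "G m \<longleftrightarrow> m 3 = 0 \<and> m 4 = 1 \<and> m 5 = int k \<and> m 6 = int n \<and> m 7 = int (length u) \<and>
     m 8 = int (BU n) \<and> m 9 = int (BP n) \<and> m 10 = int (BE n) \<and> m 11 = int (BW n) \<and>
     (\<forall>i<length u. m (BU n + i) = int (u!i)) \<and> bnd n m"

lemma G_regs: "G m \<Longrightarrow> m 3 = 0 \<and> m 4 = 1 \<and> m 5 = int k \<and> m 6 = int n \<and> m 7 = int (length u) \<and>
     m 8 = int (BU n) \<and> m 9 = int (BP n) \<and> m 10 = int (BE n) \<and> m 11 = int (BW n) \<and> bnd n m"
  unfolding G_def by simp

lemma G_upd [simp]: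
  assumes "G m" "a < 3 \<or> (12 \<le> a \<and> a \<le> 16) \<or> (BP n \<le> a \<and> a < 80*n)"
  shows "G (m(a := v))"
proof -
  have "a < 80*n" using assms(2) n1 by auto
  moreover have "\<And>i. i < length u \<Longrightarrow> BU n + i \<noteq> a" using assms(2) un unfolding BU_def BP_def by auto
  moreover have "16 < BP n" unfolding BP_def using n1 by simp
  ultimately show ?thesis using assms(1) assms(2) unfolding G_def by auto
qed

lemma setup3:
  assumes "CI (length u) m"
  shows "hoare n (19, m) (\<lambda>c. fst c = 34 \<and> G (snd c)) 15"
proof -
  have f: "m 2 = int (3 + length u)" "m 1 = int (64*n)" "m (64*n+1) = int k" "bnd n m"
     "\<forall>i<length u. m (64*n+3+i) = int (u!i)"
    using assms unfolding CI_def by auto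
  show ?thesis
    using f n1
    apply -
    apply (rule H_stepN, simp, simp, simp)+
    apply (rule H_done)
     apply simp
    using un by (auto simp: G_def BU_def BP_def BE_def BW_def)
qed

lemma setup_all: "hoare n (init k n u) (\<lambda>c. fst c = 34 \<and> G (snd c)) (10 + Suc (length u) * 9 + 15)"
proof -
  have "hoare n (init k n u) (\<lambda>c. fst c = 19 \<and> CI (length u) (snd c)) (10 + Suc (length u) * 9)"
  proof (rule H_seq[OF setup1])
    fix c :: config assume "fst c = 10 \<and> CI 0 (snd c)"
    then show "hoare n c (\<lambda>c. fst c = 19 \<and> CI (length u) (snd c)) (Suc (length u) * 9)"
      using setup_loop by (cases c) auto
  qed
  then show ?thesis
  proof (rule H_seq)
    fix c :: config assume "fst c = 19 \<and> CI (length u) (snd c)"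
    then show "hoare n c (\<lambda>c. fst c = 34 \<and> G (snd c)) 15"
      using setup3 by (cases c) auto
  qed
qed

end


context ctx begin

lemma BU_ne1 [simp]: "x < 17 \<Longrightarrow> BU n + j \<noteq> x" unfolding BU_def using n1 by simp
lemma BU_ne2 [simp]: "x < 17 \<Longrightarrow> x \<noteq> BU n + j" unfolding BU_def using n1 by simp
lemma BU_ne3 [simp]: "x < 17 \<Longrightarrow> BU n \<noteq> x" unfolding BU_def using n1 by simp
lemma BU_ne4 [simp]: "x < 17 \<Longrightarrow> x \<noteq> BU n" unfolding BU_def using n1 by simp
lemma BP_ne1 [simp]: "x < 17 \<Longrightarrow> BP n + j \<noteq> x" unfolding BP_def using n1 by simp
lemma BP_ne2 [simp]: "x < 17 \<Longrightarrow> x \<noteq> BP n + j" unfolding BP_def using n1 by simp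
lemma BP_ne3 [simp]: "x < 17 \<Longrightarrow> BP n \<noteq> x" unfolding BP_def using n1 by simp
lemma BP_ne4 [simp]: "x < 17 \<Longrightarrow> x \<noteq> BP n" unfolding BP_def using n1 by simp
lemma BE_ne1 [simp]: "x < 17 \<Longrightarrow> BE n + j \<noteq> x" unfolding BE_def using n1 by simp
lemma BE_ne2 [simp]: "x < 17 \<Longrightarrow> x \<noteq> BE n + j" unfolding BE_def using n1 by simp
lemma BE_ne3 [simp]: "x < 17 \<Longrightarrow> BE n \<noteq> x" unfolding BE_def using n1 by simp
lemma BE_ne4 [simp]: "x < 17 \<Longrightarrow> x \<noteq> BE n" unfolding BE_def using n1 by simp
lemma BW_ne1 [simp]: "x < 17 \<Longrightarrow> BW n + j \<noteq> x" unfolding BW_def using n1 by simp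
lemma BW_ne2 [simp]: "x < 17 \<Longrightarrow> x \<noteq> BW n + j" unfolding BW_def using n1 by simp
lemma BW_ne3 [simp]: "x < 17 \<Longrightarrow> BW n \<noteq> x" unfolding BW_def using n1 by simp
lemma BW_ne4 [simp]: "x < 17 \<Longrightarrow> x \<noteq> BW n" unfolding BW_def using n1 by simp

definition PWa :: "(nat \<Rightarrow> int) \<Rightarrow> bool" where
  "PWa m \<longleftrightarrow> (\<forall>e\<le>n. m (BP n + e) = int k ^ e)"

definition ID :: "nat \<Rightarrow> config \<Rightarrow> bool" where
  "ID j c \<longleftrightarrow> fst c = 36 \<and> G (snd c) \<and> snd c 12 = int j \<and> snd c 16 = int k ^ j \<and>
     (\<forall>e<j. snd c (BP n + e) = int k ^ e)"

lemma BP_bound: "e \<le> n \<Longrightarrow> BP n + e < 80*n" unfolding BP_def using n1 by simp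

lemma blockD_iter:
  assumes j: "j < n" and I: "ID j (36, m)"
  shows "hoare n (36, m) (ID (Suc j)) 7"
proof -
  have g: "G m" and f: "m 12 = int j" "m 16 = int k ^ j" "\<forall>e<j. m (BP n + e) = int k ^ e"
    using I unfolding ID_def by auto
  have b: "BP n + j < 80*n" using BP_bound j by simp
  show ?thesis
    using G_regs[OF g] f j n1 b
    apply -
    apply (rule H_stepN, simp, simp, simp)+
    apply (rule H_done)
     apply simp
    using g f b by (auto simp: ID_def less_Suc_eq BP_def)
qed

lemma blockD_last:
  assumes I: "ID n (36, m)"
  shows "hoare n (36, m) (\<lambda>c. fst c = 43 \<and> G (snd c) \<and> PWa (snd c)) 4"
proof -
  have g: "G m" and f: "m 12 = int n" "m 16 = int k ^ n" "\<forall>e<n. m (BP n + e) = int k ^ e"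
    using I unfolding ID_def by auto
  have b: "BP n + n < 80*n" using BP_bound by simp
  show ?thesis
    using G_regs[OF g] f n1 b
    apply -
    apply (rule H_stepN, simp, simp, simp)+
    apply (rule H_done)
     apply simp
    using g f b by (auto simp: PWa_def le_less BP_def)
qed

lemma blockD:
  assumes g: "G m"
  shows "hoare n (34, m) (\<lambda>c. fst c = 43 \<and> G (snd c) \<and> PWa (snd c)) (2 + Suc n * 7)"
proof (rule H_seq)
  show "hoare n (34, m) (ID 0) 2"
    using G_regs[OF g] n1
    apply -
    apply (rule H_stepN, simp, simp, simp)+
    apply (rule H_done)
     apply simp
    using g by (auto simp: ID_def)
next
  fix c assume "ID 0 c"
  then show "hoare n c (\<lambda>c. fst c = 43 \<and> G (snd c) \<and> PWa (snd c)) (Suc n * 7)"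
  proof (rule H_loop[where I=ID, rotated 2])
    fix j and c :: config assume "j < n" "ID j c"
    then show "hoare n c (\<lambda>c'. (fst c' = 43 \<and> G (snd c') \<and> PWa (snd c')) \<or> ID (Suc j) c') 7"
      using blockD_iter[of j "snd c"] unfolding ID_def
      by (cases c) (auto elim!: H_mono simp: ID_def)
  next
    fix c :: config assume "ID n c"
    then show "hoare n c (\<lambda>c. fst c = 43 \<and> G (snd c) \<and> PWa (snd c)) 7"
      using blockD_last[of "snd c"] unfolding ID_def
      by (cases c) (auto elim!: H_mono)
  qed
qed

end


context ctx begin

lemma small_lt80 [simp]: "a < 17 \<Longrightarrow> a < 80*n" using n1 by simp

definition EaP :: "nat \<Rightarrow> (nat \<Rightarrow> int) \<Rightarrow> bool" where
  "EaP j m \<longleftrightarrow> (\<forall>d q. 1 \<le> d \<longrightarrow> d \<le> j \<longrightarrow> d < q \<longrightarrow> q \<le> length u \<longrightarrow>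
      (int q \<le> m (BE n + d) \<longleftrightarrow> (\<forall>i<q-d. u!i = u!(d+i))))"

definition IZ :: "nat \<Rightarrow> nat \<Rightarrow> config \<Rightarrow> bool" where
  "IZ d z c \<longleftrightarrow> fst c = 48 \<and> G (snd c) \<and> PWa (snd c) \<and> EaP (d - 1) (snd c) \<and>
     snd c 12 = int d \<and> snd c 13 = int z \<and> d + z \<le> length u \<and> 1 \<le> d \<and> (\<forall>i<z. u!i = u!(d+i))"

definition QZ :: "nat \<Rightarrow> config \<Rightarrow> bool" where
  "QZ d c \<longleftrightarrow> fst c = 61 \<and> G (snd c) \<and> PWa (snd c) \<and> EaP (d - 1) (snd c) \<and>
     snd c 12 = int d \<and> 1 \<le> d \<and> (\<exists>z. snd c 13 = int z \<and> d + z \<le> length u \<and> (\<forall>i<z. u!i = u!(d+i)) \<and>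
       (d + z = length u \<or> u!z \<noteq> u!(d+z)))"

lemma PWa_upd [simp]:
  assumes "PWa m" "a < 17 \<or> BE n \<le> a"
  shows "PWa (m(a := v))"
  unfolding PWa_def
proof (intro allI impI)
  fix e assume e: "e \<le> n"
  have "BP n + e \<noteq> a" using assms(2) e n1 unfolding BP_def BE_def by auto
  then have "(m(a := v)) (BP n + e) = m (BP n + e)" by simp
  then show "(m(a := v)) (BP n + e) = int k ^ e" using assms(1) e unfolding PWa_def by simp
qed

lemma EaP_upd [simp]:
  assumes "EaP j m" "a < 17 \<or> BE n + j < a"
  shows "EaP j (m(a := v))"
  unfolding EaP_def
proof (intro allI impI)
  fix d q assume dq: "1 \<le> d" "d \<le> j" "d < q" "q \<le> length u"
  have "BE n + d \<noteq> a" using assms(2) dq n1 unfolding BE_def by auto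
  then have "(m(a := v)) (BE n + d) = m (BE n + d)" by simp
  then show "(int q \<le> (m(a := v)) (BE n + d)) = (\<forall>i<q - d. u ! i = u ! (d + i))"
    using assms(1) dq unfolding EaP_def by simp
qed

lemma BU_bound: "i < length u \<Longrightarrow> BU n + i < BP n" unfolding BU_def BP_def using un by simp

lemma G_arr: "G m \<Longrightarrow> i < length u \<Longrightarrow> m (BU n + i) = int (u!i)" unfolding G_def by simp

lemma blockZ_iter:
  assumes z: "z < length u - d" and I: "IZ d z (48, m)"
  shows "hoare n (48, m) (\<lambda>c. QZ d c \<or> IZ d (Suc z) c) 12"
proof -
  have g: "G m" and f: "PWa m" "EaP (d-1) m" "m 12 = int d" "m 13 = int z" "d + z \<le> length u" "1 \<le> d"
     "\<forall>i<z. u!i = u!(d+i)"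
    using I unfolding IZ_def by auto
  have dz: "d + z < length u" using z by simp
  have a1: "m (BU n + z) = int (u!z)" using G_arr[OF g] dz by simp
  have a2: "m (BU n + (d + z)) = int (u!(d+z))" using G_arr[OF g] dz by simp
  have a3: "m (BU n + d + z) = int (u!(d+z))" using a2 by (simp add: add.assoc)
  show ?thesis
  proof (cases "u!z = u!(d+z)")
    case True
    have "hoare n (48, m) (IZ d (Suc z)) 12"
      using G_regs[OF g] f(3,4) dz a1 a2 True n1
      apply -
      apply (rule H_stepN, simp, simp, simp)+
      apply (rule H_done)
       apply simp
      using g f dz True by (auto simp: IZ_def less_Suc_eq)
    then show ?thesis by (rule H_mono) auto
  next
    case False
    then have F: "int (u!(d+z)) - int (u!z) \<noteq> 0" by simp
    have "hoare n (48, m) (QZ d) 11"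
      using G_regs[OF g] f(3,4) dz a1 a2 F n1
      apply -
      apply (rule H_stepN, simp, simp, simp)+
      apply (rule H_done)
       apply simp
      using g f dz False by (auto simp: QZ_def)
    then show ?thesis by (rule H_mono) auto
  qed
qed


lemma blockZ_last:
  assumes z: "z = length u - d" and I: "IZ d z (48, m)"
  shows "hoare n (48, m) (QZ d) 4"
proof -
  have g: "G m" and f: "PWa m" "EaP (d-1) m" "m 12 = int d" "m 13 = int z" "d + z \<le> length u" "1 \<le> d"
     "\<forall>i<z. u!i = u!(d+i)"
    using I unfolding IZ_def by auto
  have dz: "d + z = length u" using z f(5) by simp
  show ?thesis
    using G_regs[OF g] f(3,4) dz n1
    apply -
    apply (rule H_stepN, simp, simp, simp)+
    apply (rule H_done)
     apply simp
    using g f dz by (auto simp: QZ_def)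
qed

lemma blockZ:
  assumes I: "IZ d 0 (48, m)"
  shows "hoare n (48, m) (QZ d) (Suc (length u - d) * 12)"
proof (rule H_loop[where I="IZ d"])
  show "IZ d 0 (48, m)" by (rule I)
next
  fix z and c :: config assume "z < length u - d" "IZ d z c"
  then show "hoare n c (\<lambda>c'. QZ d c' \<or> IZ d (Suc z) c') 12"
    using blockZ_iter[of z d "snd c"] unfolding IZ_def by (cases c) auto
next
  fix c :: config assume "IZ d (length u - d) c"
  then show "hoare n c (QZ d) 12"
    using blockZ_last[of "length u - d" d "snd c"] unfolding IZ_def
    by (cases c) (auto elim!: H_mono)
qed

lemma z_char:
  assumes "d + z \<le> length u" "\<forall>i<z. u!i = u!(d+i)" "d + z = length u \<or> u!z \<noteq> u!(d+z)"
    "d < q" "q \<le> length u"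
  shows "q \<le> d + z \<longleftrightarrow> (\<forall>i<q-d. u!i = u!(d+i))"
proof
  assume "q \<le> d + z" then show "\<forall>i<q-d. u!i = u!(d+i)" using assms(2) by auto
next
  assume h: "\<forall>i<q-d. u!i = u!(d+i)"
  show "q \<le> d + z"
  proof (rule ccontr)
    assume "\<not> q \<le> d + z"
    then have "z < q - d" "d + z < length u" using assms by auto
    then show False using h assms(3) by auto
  qed
qed

definition IE :: "nat \<Rightarrow> config \<Rightarrow> bool" where
  "IE j c \<longleftrightarrow> fst c = 44 \<and> G (snd c) \<and> PWa (snd c) \<and> EaP j (snd c) \<and> snd c 12 = int (Suc j)"

lemma blockE_store:
  assumes Q: "QZ d (61, m)"
  shows "hoare n (61, m) (IE d) 5"
proof -
  have g: "G m" and f: "PWa m" "EaP (d-1) m" "m 12 = int d" "1 \<le> d"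
    using Q unfolding QZ_def by auto
  obtain z where z: "m 13 = int z" "d + z \<le> length u" "\<forall>i<z. u!i = u!(d+i)"
       "d + z = length u \<or> u!z \<noteq> u!(d+z)"
    using Q unfolding QZ_def by auto
  have b: "BE n + d < 80*n" using z(2) un n1 unfolding BE_def by simp
  have b2: "BE n + (d - 1) < BE n + d" using f(4) by simp
  show ?thesis
    using G_regs[OF g] f(3) z(1) n1 b b2
    apply -
    apply (rule H_stepN, simp, simp, simp)+
    apply (rule H_done)
     apply simp
    apply (simp only: IE_def fst_conv snd_conv)
    apply (intro conjI)
        apply simp
       using g b apply (simp add: BE_def BP_def)
      using f(1) apply simp
     prefer 2 apply simp
    apply (unfold EaP_def)
    apply (intro allI impI)
    subgoal for d' q
      apply (cases "d' = d")
       using z_char[OF z(2,3,4)] apply (simp del: of_nat_add add: of_nat_add[symmetric])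
      using f(2) unfolding EaP_def apply simp
      done
    done
qed

end


context ctx begin

lemma n_pos [simp]: "0 < n" using n1 by simp
lemma n_ge1 [simp]: "Suc 0 \<le> n" using n1 by simp

lemma blockE_first:
  assumes j: "Suc j < length u" and I: "IE j (44, m)"
  shows "hoare n (44, m) (IZ (Suc j) 0) 4"
proof -
  have g: "G m" and f: "PWa m" "EaP j m" "m 12 = int (Suc j)"
    using I unfolding IE_def by auto
  show ?thesis
    using G_regs[OF g] f(3) j
    apply -
    apply (rule H_stepN, simp, simp, simp)+
    apply (rule H_done)
     apply simp
    using g f j by (simp add: IZ_def)
qed

lemma blockE_iter:
  assumes j: "j < length u - 1" and I: "IE j c"
  shows "hoare n c (IE (Suc j)) (12*n + 21)"
proof -
  obtain m where c: "c = (44, m)" using I unfolding IE_def by (cases c) auto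
  have j': "Suc j < length u" using j by simp
  have "hoare n (44, m) (IE (Suc j)) (4 + Suc (length u - Suc j) * 12 + 5)"
  proof (rule H_seq)
    show "hoare n (44, m) (QZ (Suc j)) (4 + Suc (length u - Suc j) * 12)"
    proof (rule H_seq[OF blockE_first[OF j' I[unfolded c]]])
      fix c' :: config assume "IZ (Suc j) 0 c'"
      then show "hoare n c' (QZ (Suc j)) (Suc (length u - Suc j) * 12)"
        using blockZ[of "Suc j" "snd c'"] unfolding IZ_def by (cases c') auto
    qed
  next
    fix c' :: config assume "QZ (Suc j) c'"
    then show "hoare n c' (IE (Suc j)) 5"
      using blockE_store[of "Suc j" "snd c'"] unfolding QZ_def by (cases c') auto
  qed
  moreover have "4 + Suc (length u - Suc j) * 12 + 5 \<le> 12*n + 21" using un by simp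
  ultimately show ?thesis unfolding c by (rule H_mono) auto
qed

lemma blockE_last:
  assumes j: "length u \<le> Suc j" and I: "IE j (44, m)"
  shows "hoare n (44, m) (\<lambda>c. fst c = 66 \<and> G (snd c) \<and> PWa (snd c) \<and> EaP j (snd c)) 3"
proof -
  have g: "G m" and f: "PWa m" "EaP j m" "m 12 = int (Suc j)"
    using I unfolding IE_def by auto
  show ?thesis
    using G_regs[OF g] f(3) j
    apply -
    apply (rule H_stepN, simp, simp, simp)+
    apply (rule H_done)
     apply simp
    using g f j by simp
qed

lemma blockE:
  assumes "G m" "PWa m"
  shows "hoare n (43, m) (\<lambda>c. fst c = 66 \<and> G (snd c) \<and> PWa (snd c) \<and> EaP (length u - 1) (snd c))
     (1 + Suc (length u - 1) * (12*n + 21))"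
proof (rule H_seq)
  show "hoare n (43, m) (IE 0) 1"
    using assms G_regs[OF assms(1)]
    apply -
    apply (rule H_stepN, simp, simp, simp)+
    apply (rule H_done)
     apply simp
    by (simp add: IE_def EaP_def)
next
  fix c :: config assume "IE 0 c"
  then show "hoare n c (\<lambda>c. fst c = 66 \<and> G (snd c) \<and> PWa (snd c) \<and> EaP (length u - 1) (snd c))
     (Suc (length u - 1) * (12*n + 21))"
  proof (rule H_loop[where I=IE, rotated 2])
    fix j and c :: config assume a: "j < length u - 1" "IE j c"
    show "hoare n c (\<lambda>c'. (fst c' = 66 \<and> G (snd c') \<and> PWa (snd c') \<and> EaP (length u - 1) (snd c')) \<or> IE (Suc j) c') (12*n + 21)"
      using blockE_iter[OF a] by (rule H_mono) auto
  next
    fix c :: config assume I: "IE (length u - 1) c"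
    obtain m where c: "c = (44, m)" using I unfolding IE_def by (cases c) auto
    have "hoare n c (\<lambda>c. fst c = 66 \<and> G (snd c) \<and> PWa (snd c) \<and> EaP (length u - 1) (snd c)) 3"
      using blockE_last[of "length u - 1" m] I c by simp
    then show "hoare n c (\<lambda>c. fst c = 66 \<and> G (snd c) \<and> PWa (snd c) \<and> EaP (length u - 1) (snd c)) (12*n + 21)"
      by (rule H_mono) auto
  qed
qed

end


lemma nat_int_diff [simp]: "nat (int a - int b) = a - b"
  by (cases "b \<le> a") (auto simp: of_nat_diff)

lemma nat_int_diff2 [simp]: "nat (int a - (int b + int c)) = a - (b + c)"
  by (metis nat_int_diff of_nat_add)

lemma nat_int_diff3 [simp]: "nat (int a - 2 * int b) = a - 2 * b"
  by (metis nat_int_diff of_nat_mult of_nat_numeral)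

context ctx begin

definition Wa :: "nat \<Rightarrow> (nat \<Rightarrow> int) \<Rightarrow> bool" where
  "Wa M m \<longleftrightarrow> (\<forall>l. 1 \<le> l \<longrightarrow> l < M \<longrightarrow> m (BW n + l) = int (Wn k u l))"

definition Ea :: "(nat \<Rightarrow> int) \<Rightarrow> bool" where
  "Ea m \<longleftrightarrow> EaP (length u - 1) m"

definition IG :: "nat \<Rightarrow> nat \<Rightarrow> config \<Rightarrow> bool" where
  "IG mm l c \<longleftrightarrow> fst c = 76 \<and> G (snd c) \<and> PWa (snd c) \<and> Ea (snd c) \<and> Wa mm (snd c) \<and>
     snd c 12 = int mm \<and> snd c 14 = int (min (length u) mm) \<and> snd c 13 = int l \<and> 1 \<le> l \<and>
     snd c 15 = (\<Sum>x\<in>{1..<l}. int (Wn k u x) * int (gn k u x mm)) \<and> 1 \<le> mm \<and> mm \<le> n"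

lemma PW_fact: "PWa m \<Longrightarrow> e \<le> n \<Longrightarrow> m (BP n + e) = int k ^ e"
  unfolding PWa_def by simp

lemma frame_G: "G m \<Longrightarrow> (\<forall>a. 2 < a \<and> a < 12 \<or> 16 < a \<longrightarrow> m' a = m a) \<Longrightarrow> G m'"
proof -
  assume g: "G m" and fr: "\<forall>a. 2 < a \<and> a < 12 \<or> 16 < a \<longrightarrow> m' a = m a"
  have "\<And>i. 16 < BU n + i" unfolding BU_def using n1 by linarith
  have "bnd n m'" unfolding bnd_def
  proof (intro allI impI)
    fix a assume a: "80*n \<le> a"
    then have "16 < a" using n1 by linarith
    then have "m' a = m a" using fr by simp
    then show "m' a = 0" using g a unfolding G_def bnd_def by simp
  qed
  then show "G m'" using g fr \<open>\<And>i. 16 < BU n + i\<close> unfolding G_def by auto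
qed

lemma frame_PWa:
  assumes "PWa m" "\<forall>a. 16 < a \<longrightarrow> m' a = m a" shows "PWa m'"
  unfolding PWa_def
proof (intro allI impI)
  fix e assume e: "e \<le> n"
  have "16 < BP n + e" using n1 unfolding BP_def by linarith
  then have "m' (BP n + e) = m (BP n + e)" using assms(2) by simp
  then show "m' (BP n + e) = int k ^ e" using assms(1) e unfolding PWa_def by simp
qed

lemma frame_Ea:
  assumes "Ea m" "\<forall>a. 16 < a \<longrightarrow> m' a = m a" shows "Ea m'"
  unfolding Ea_def EaP_def
proof (intro allI impI)
  fix d q assume dq: "1 \<le> d" "d \<le> length u - 1" "d < q" "q \<le> length u"
  have "16 < BE n + d" using n1 unfolding BE_def by linarith
  then have "m' (BE n + d) = m (BE n + d)" using assms(2) by simp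
  then show "(int q \<le> m' (BE n + d)) = (\<forall>i<q - d. u ! i = u ! (d + i))"
    using assms(1) dq unfolding Ea_def EaP_def by simp
qed

lemma frame_Wa:
  assumes "Wa M m" "\<forall>a. 16 < a \<longrightarrow> m' a = m a" shows "Wa M m'"
  unfolding Wa_def
proof (intro allI impI)
  fix l assume l: "1 \<le> l" "l < M"
  have "16 < BW n + l" using n1 unfolding BW_def by linarith
  then have "m' (BW n + l) = m (BW n + l)" using assms(2) by simp
  then show "m' (BW n + l) = int (Wn k u l)" using assms(1) l unfolding Wa_def by simp
qed

lemma IG_next:
  assumes I: "IG mm l (76, m)" and l2: "2*l \<le> mm"
    and fr: "\<forall>a. a \<noteq> 0 \<and> a \<noteq> 1 \<and> a \<noteq> 2 \<and> a \<noteq> 13 \<and> a \<noteq> 15 \<longrightarrow> m' a = m a"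
    and m13: "m' 13 = int l + 1"
    and m15: "m' 15 = m 15 + int (Wn k u l) * int (gn k u l mm)"
  shows "IG mm (Suc l) (76, m')"
proof -
  have g: "G m" and f: "PWa m" "Ea m" "Wa mm m" "m 12 = int mm" "m 14 = int (min (length u) mm)"
    "m 13 = int l" "1 \<le> l" "m 15 = (\<Sum>x\<in>{1..<l}. int (Wn k u x) * int (gn k u x mm))" "1 \<le> mm" "mm \<le> n"
    using I unfolding IG_def by auto
  have fr2: "\<forall>a. 16 < a \<longrightarrow> m' a = m a" using fr by auto
  have "G m'" using frame_G[OF g] fr by auto
  moreover have "PWa m'" using frame_PWa[OF f(1) fr2] .
  moreover have "Ea m'" using frame_Ea[OF f(2) fr2] .
  moreover have "Wa mm m'" using frame_Wa[OF f(3) fr2] .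
  moreover have "m' 15 = (\<Sum>x\<in>{1..<Suc l}. int (Wn k u x) * int (gn k u x mm))"
    using m15 f(8) f(7) by (simp add: sum.atLeastLessThan_Suc)
  ultimately show ?thesis using f fr m13 unfolding IG_def by auto
qed

lemma blockG_case1:
  assumes I: "IG mm l (76, m)" and l2: "2*l \<le> mm" and q: "min (length u) mm \<le> l"
  shows "hoare n (76, m) (IG mm (Suc l)) 14"
proof -
  have g: "G m" and f: "PWa m" "Ea m" "Wa mm m" "m 12 = int mm" "m 14 = int (min (length u) mm)"
    "m 13 = int l" "1 \<le> l" "m 15 = (\<Sum>x\<in>{1..<l}. int (Wn k u x) * int (gn k u x mm))" "1 \<le> mm" "mm \<le> n"
    using I unfolding IG_def by auto
  have w: "m (BW n + l) = int (Wn k u l)" using f(3,7) l2 unfolding Wa_def by simp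
  define q where "q = min (length u) mm"
  have f5: "m 14 = int q" using f(5) q_def by simp
  have q': "q \<le> l" using q q_def by simp
  have gv: "gn k u l mm = k^(mm - 2*l)" using q' unfolding gn_def q_def Let_def by simp
  have eqA: "BP n + mm - 2 * l = BP n + (mm - 2 * l)" using l2 by simp
  have pw: "m (BP n + mm - 2 * l) = int k ^ (mm - 2 * l)"
    apply (subst eqA) apply (rule PW_fact[OF f(1)]) using l2 f(10) by simp
  have ne: "BP n + mm - 2 * l \<noteq> 0" "BP n + mm - 2 * l \<noteq> Suc 0" "\<not> BP n + mm \<le> 2 * l"
    unfolding eqA using n1 l2 by (auto simp: BP_def)
  show ?thesis
    using G_regs[OF g] f(4,6) f5 w pw ne l2 q' f(10)
    apply -
    apply (rule H_stepN, simp, simp, simp)+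
    apply (rule H_done)
     apply simp
    apply (rule IG_next[OF I l2])
    using gv by auto
qed


lemma blockG_case2:
  assumes I: "IG mm l (76, m)" and l2: "2*l \<le> mm" and q1: "l < min (length u) mm"
    and q2: "min (length u) mm \<le> mm - l"
  shows "hoare n (76, m) (IG mm (Suc l)) 17"
proof -
  have g: "G m" and f: "PWa m" "Ea m" "Wa mm m" "m 12 = int mm" "m 14 = int (min (length u) mm)"
    "m 13 = int l" "1 \<le> l" "m 15 = (\<Sum>x\<in>{1..<l}. int (Wn k u x) * int (gn k u x mm))" "1 \<le> mm" "mm \<le> n"
    using I unfolding IG_def by auto
  have w: "m (BW n + l) = int (Wn k u l)" using f(3,7) l2 unfolding Wa_def by simp
  define q where "q = min (length u) mm"
  have f5: "m 14 = int q" using f(5) q_def by simp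
  have q': "l < q" "q \<le> mm - l" using q1 q2 q_def by auto
  have gv: "gn k u l mm = k^(mm - l - q)" using q' unfolding gn_def Let_def q_def[symmetric] by simp
  have eqA: "BP n + mm - l - q = BP n + (mm - l - q)" "BP n + mm - (l + q) = BP n + (mm - l - q)"
    using q' by auto
  have pw: "m (BP n + mm - l - q) = int k ^ (mm - l - q)" "m (BP n + mm - (l + q)) = int k ^ (mm - l - q)"
    apply (subst eqA) apply (rule PW_fact[OF f(1)]) using f(10) apply simp
    apply (subst eqA) apply (rule PW_fact[OF f(1)]) using f(10) by simp
  have ne: "BP n + mm - l - q \<noteq> 0" "BP n + mm - l - q \<noteq> Suc 0" "BP n + mm - (l + q) \<noteq> 0"
    "BP n + mm - (l + q) \<noteq> Suc 0" "\<not> BP n + mm \<le> l + q"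
    unfolding eqA using n1 q' by (auto simp: BP_def)
  have qi: "\<not> int mm - int l < int q" using q' by simp
  have nn: "nat (int mm - int l - int q) = mm - l - q" using q' by linarith
  have pw3: "m (BP n + nat (int mm - int l - int q)) = int k ^ (mm - (l + q))"
    unfolding nn using PW_fact[OF f(1), of "mm - l - q"] f(10) by simp
  show ?thesis
    using G_regs[OF g] f(4,6) f5 w pw ne l2 q' f(10) qi
    apply -
    apply (rule H_stepN, simp, simp, simp)+
    apply (rule H_done)
     apply simp
    apply (rule IG_next[OF I l2])
    using gv pw3 by auto
qed


lemma blockG_case3:
  assumes I: "IG mm l (76, m)" and l2: "2*l \<le> mm" and q1: "mm - l < min (length u) mm"
  shows "hoare n (76, m) (IG mm (Suc l)) 20"
proof -
  have g: "G m" and f: "PWa m" "Ea m" "Wa mm m" "m 12 = int mm" "m 14 = int (min (length u) mm)"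
    "m 13 = int l" "1 \<le> l" "m 15 = (\<Sum>x\<in>{1..<l}. int (Wn k u x) * int (gn k u x mm))" "1 \<le> mm" "mm \<le> n"
    using I unfolding IG_def by auto
  have w: "m (BW n + l) = int (Wn k u l)" using f(3,7) l2 unfolding Wa_def by simp
  define q where "q = min (length u) mm"
  have f5: "m 14 = int q" using f(5) q_def by simp
  have q': "mm - l < q" "q \<le> length u" "l < q" using q1 q_def l2 f(7) by auto
  define e where "e = m (BE n + (mm - l))"
  define C where "C = (\<forall>i<q-(mm-l). u!i = u!(mm-l+i))"
  have gv: "gn k u l mm = (if C then 1 else 0)" using q' unfolding gn_def Let_def q_def[symmetric] C_def by simp
  have d1: "1 \<le> mm - l" "mm - l \<le> length u - 1" using q' l2 f(7) by auto
  have eC: "int q \<le> e \<longleftrightarrow> C"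
    unfolding e_def C_def using f(2) d1 q' unfolding Ea_def EaP_def by blast
  have eqA: "BE n + mm - l = BE n + (mm - l)" using l2 by simp
  have nn: "nat (int mm - int l) = mm - l" by simp
  have ee: "m (BE n + mm - l) = e" "m (BE n + nat (int mm - int l)) = e" unfolding eqA nn e_def by simp_all
  have ne: "BE n + mm - l \<noteq> 0" "BE n + mm - l \<noteq> Suc 0" "\<not> BE n + mm \<le> l"
    unfolding eqA using n1 l2 by (auto simp: BE_def)
  have qi: "int mm - int l < int q" using q' by simp
  show ?thesis
  proof (cases C)
    case True
    then have ci: "\<not> e - int q < 0" using eC by simp
    show ?thesis
      using G_regs[OF g] f(4,6) f5 w ee ne l2 q' f(10) qi ci
      apply -
      apply (rule H_stepN, simp, simp, simp)+
      apply (rule H_done)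
       apply simp
      apply (rule IG_next[OF I l2])
      using gv True by auto
  next
    case False
    then have ci: "e - int q < 0" using eC by simp
    have "hoare n (76, m) (IG mm (Suc l)) 19"
      using G_regs[OF g] f(4,6) f5 w ee ne l2 q' f(10) qi ci
      apply -
      apply (rule H_stepN, simp, simp, simp)+
      apply (rule H_done)
       apply simp
      apply (rule IG_next[OF I l2])
      using gv False by auto
    then show ?thesis by (rule H_mono) auto
  qed
qed

end


context ctx begin

lemma Ea_upd_small [simp]: "Ea m \<Longrightarrow> a < 17 \<Longrightarrow> Ea (m(a := v))"
  by (rule frame_Ea) auto

lemma Wa_upd_small [simp]: "Wa M m \<Longrightarrow> a < 17 \<Longrightarrow> Wa M (m(a := v))"
  by (rule frame_Wa) auto

lemma blockG_iter:
  assumes I: "IG mm l (76, m)" and l2: "2*l \<le> mm"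
  shows "hoare n (76, m) (IG mm (Suc l)) 20"
proof (cases "min (length u) mm \<le> l")
  case True
  show ?thesis using blockG_case1[OF I l2 True] by (rule H_mono) auto
next
  case F1: False
  show ?thesis
  proof (cases "min (length u) mm \<le> mm - l")
    case True
    have "l < min (length u) mm" using F1 by (simp only: not_le)
    then show ?thesis using blockG_case2[OF I l2 _ True] by (rule_tac H_mono) auto
  next
    case False
    show ?thesis using blockG_case3[OF I l2] False by simp
  qed
qed

definition QG :: "nat \<Rightarrow> config \<Rightarrow> bool" where
  "QG mm c \<longleftrightarrow> fst c = 102 \<and> G (snd c) \<and> PWa (snd c) \<and> Ea (snd c) \<and> Wa mm (snd c) \<and>
     snd c 12 = int mm \<and> snd c 14 = int (min (length u) mm) \<and>
     snd c 15 = int (card (Bset k u mm)) \<and> 1 \<le> mm \<and> mm \<le> n"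

lemma blockG_exit:
  assumes I: "IG mm l (76, m)" and l2: "mm < 2*l" "l \<le> Suc (mm div 2)"
  shows "hoare n (76, m) (QG mm) 3"
proof -
  have g: "G m" and f: "PWa m" "Ea m" "Wa mm m" "m 12 = int mm" "m 14 = int (min (length u) mm)"
    "m 13 = int l" "1 \<le> l" "m 15 = (\<Sum>x\<in>{1..<l}. int (Wn k u x) * int (gn k u x mm))" "1 \<le> mm" "mm \<le> n"
    using I unfolding IG_def by auto
  have lv: "l = Suc (mm div 2)" using l2 by linarith
  have S: "m 15 = int (card (Bset k u mm))"
  proof -
    have "{1..<l} = {1..mm div 2}" using lv by auto
    then show ?thesis using f(8) card_Bset[OF uk, of mm] by simp
  qed
  have li: "int mm - 2 * int l < 0" using l2 by simp
  show ?thesis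
    using G_regs[OF g] f(4,6) li
    apply -
    apply (rule H_stepN, simp, simp, simp)+
    apply (rule H_done)
     apply simp
    using g f S by (simp add: QG_def)
qed

lemma blockG:
  assumes I: "IG mm 1 (76, m)"
  shows "hoare n (76, m) (QG mm) (Suc (mm div 2) * 20)"
proof (rule H_loop[where I="\<lambda>i. IG mm (Suc i)"])
  show "IG mm (Suc 0) (76, m)" using I by simp
next
  fix i and c :: config assume a: "i < mm div 2" "IG mm (Suc i) c"
  obtain m' where c: "c = (76, m')" using a unfolding IG_def by (cases c) auto
  have "hoare n c (IG mm (Suc (Suc i))) 20" unfolding c
    by (rule blockG_iter) (use a c in auto)
  then show "hoare n c (\<lambda>c'. QG mm c' \<or> IG mm (Suc (Suc i)) c') 20" by (rule H_mono) auto
next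
  fix c :: config assume a: "IG mm (Suc (mm div 2)) c"
  obtain m' where c: "c = (76, m')" using a unfolding IG_def by (cases c) auto
  have "hoare n c (QG mm) 3" unfolding c
    by (rule blockG_exit) (use a c in auto)
  then show "hoare n c (QG mm) 20" by (rule H_mono) auto
qed


definition IF :: "nat \<Rightarrow> config \<Rightarrow> bool" where
  "IF j c \<longleftrightarrow> fst c = 67 \<and> G (snd c) \<and> PWa (snd c) \<and> Ea (snd c) \<and> Wa (Suc j) (snd c) \<and>
     snd c 12 = int (Suc j) \<and> (1 \<le> j \<longrightarrow> snd c 15 = int (card (Bset k u j))) \<and> j \<le> n"

lemma blockF_head:
  assumes I: "IF j (67, m)" and j: "j < n"
  shows "hoare n (67, m) (IG (Suc j) 1) 9"
proof -
  have g: "G m" and f: "PWa m" "Ea m" "Wa (Suc j) m" "m 12 = int (Suc j)"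
    using I unfolding IF_def by auto
  have ji: "\<not> int n - (1 + int j) < 0" using j by simp
  show ?thesis
  proof (cases "length u \<le> Suc j")
    case True
    have pi: "int (length u) - (1 + int j) - 1 < 0" using True by simp
    have "hoare n (67, m) (IG (Suc j) 1) 8"
      using G_regs[OF g] f(4) ji pi
      apply -
      apply (rule H_stepN, simp, simp, simp)+
      apply (rule H_done)
       apply simp
      using g f j True by (simp add: IG_def min_def)
    then show ?thesis by (rule H_mono) auto
  next
    case False
    have pi: "\<not> int (length u) - (1 + int j) - 1 < 0" using False by simp
    show ?thesis
      using G_regs[OF g] f(4) ji pi
      apply -
      apply (rule H_stepN, simp, simp, simp)+
      apply (rule H_done)
       apply simp
      using g f j False by (simp add: IG_def min_def)
  qed
qed

lemma blockF_exit:
  assumes I: "IF n (67, m)"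
  shows "hoare n (67, m) (\<lambda>c. fst c = 111 \<and> snd c 0 = int (card (Bset k u n))) 3"
proof -
  have g: "G m" and f: "m 12 = int (Suc n)" "m 15 = int (card (Bset k u n))"
    using I n1 unfolding IF_def by auto
  show ?thesis
    using G_regs[OF g] f
    apply -
    apply (rule H_stepN, simp, simp, simp)+
    apply (rule H_done)
     apply simp
    by simp
qed

lemma Ea_upd_big [simp]: "Ea m \<Longrightarrow> BW n \<le> a \<Longrightarrow> Ea (m(a := v))"
  unfolding Ea_def by (rule EaP_upd) (use un in \<open>auto simp: BE_def BW_def\<close>)

lemma PWa_upd_big [simp]: "PWa m \<Longrightarrow> BW n \<le> a \<Longrightarrow> PWa (m(a := v))"
  by (rule PWa_upd) (auto simp: BE_def BW_def)

lemma Wa_extend: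
  assumes "Wa mm m" "m' (BW n + mm) = int (Wn k u mm)" "\<forall>a. 16 < a \<and> a \<noteq> BW n + mm \<longrightarrow> m' a = m a"
  shows "Wa (Suc mm) m'"
  unfolding Wa_def
proof (intro allI impI)
  fix l assume l: "1 \<le> l" "l < Suc mm"
  show "m' (BW n + l) = int (Wn k u l)"
  proof (cases "l = mm")
    case True then show ?thesis using assms(2) by simp
  next
    case False
    have "16 < BW n + l" using n1 unfolding BW_def by linarith
    then have "m' (BW n + l) = m (BW n + l)" using assms(3) False by simp
    then show ?thesis using assms(1) l False unfolding Wa_def by simp
  qed
qed

lemma blockW:
  assumes Q: "QG mm (102, m)"
  shows "hoare n (102, m) (IF mm) 8"
proof -
  have g: "G m" and f: "PWa m" "Ea m" "Wa mm m" "m 12 = int mm" "m 14 = int (min (length u) mm)"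
    "m 15 = int (card (Bset k u mm))" "1 \<le> mm" "mm \<le> n"
    using Q unfolding QG_def by auto
  define q where "q = min (length u) mm"
  have f5: "m 14 = int q" using f(5) q_def by simp
  have q': "q \<le> mm" unfolding q_def by simp
  have eqA: "BP n + mm - q = BP n + (mm - q)" using q' by simp
  have nn: "nat (int mm - int q) = mm - q" by simp
  have pw: "m (BP n + mm - q) = int k ^ (mm - q)" "m (BP n + nat (int mm - int q)) = int k ^ (mm - q)"
    unfolding eqA nn using PW_fact[OF f(1), of "mm - q"] f(8) by simp_all
  have ne: "BP n + mm - q \<noteq> 0" "BP n + mm - q \<noteq> Suc 0" "\<not> BP n + mm \<le> q"
    unfolding eqA using n1 q' by (auto simp: BP_def)
  have b1: "BW n + mm < 80*n" using f(8) n1 unfolding BW_def by linarith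
  have b: "BW n + mm < 80*n" "BP n \<le> BW n + mm" "BW n \<le> BW n + mm" using b1 unfolding BW_def BP_def by auto
  have Wv: "int k ^ (mm - q) - int (card (Bset k u mm)) = int (Wn k u mm)"
    using Wn_Bset[OF uk, of mm] unfolding q_def[symmetric]
    by (metis add_diff_cancel_right' of_nat_add of_nat_power)
  show ?thesis
    using G_regs[OF g] f(4,6) f5 pw ne b q'
    apply -
    apply (rule H_stepN, simp, simp, simp)+
    apply (rule H_done)
     apply simp
    apply (simp only: IF_def fst_conv snd_conv)
    apply (intro conjI)
           apply simp
          using g b apply simp
         using f(1) b apply simp
        using f(2) b apply simp
       apply (rule Wa_extend[OF f(3)])
        using Wv apply simp
       apply simp
      apply simp
     using f(6) apply simp
    using f(8) by simp
qed

end


context ctx begin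

lemma blockF_iter:
  assumes j: "j < n" and I: "IF j c"
  shows "hoare n c (IF (Suc j)) (20*n + 40)"
proof -
  obtain m where c: "c = (67, m)" using I unfolding IF_def by (cases c) auto
  have "hoare n (67, m) (IF (Suc j)) (9 + Suc (Suc j div 2) * 20 + 8)"
  proof (rule H_seq)
    show "hoare n (67, m) (QG (Suc j)) (9 + Suc (Suc j div 2) * 20)"
    proof (rule H_seq[OF blockF_head[OF I[unfolded c] j]])
      fix c' :: config assume "IG (Suc j) 1 c'"
      then show "hoare n c' (QG (Suc j)) (Suc (Suc j div 2) * 20)"
        using blockG[of "Suc j" "snd c'"] unfolding IG_def by (cases c') auto
    qed
  next
    fix c' :: config assume "QG (Suc j) c'"
    then show "hoare n c' (IF (Suc j)) 8"
      using blockW[of "Suc j" "snd c'"] unfolding QG_def by (cases c') auto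
  qed
  moreover have "9 + Suc (Suc j div 2) * 20 + 8 \<le> 20*n + 40" using j by simp
  ultimately show ?thesis unfolding c by (rule H_mono) auto
qed

lemma blockF:
  assumes g: "G m" and f: "PWa m" "Ea m"
  shows "hoare n (66, m) (\<lambda>c. fst c = 111 \<and> snd c 0 = int (card (Bset k u n))) (1 + Suc n * (20*n + 40))"
proof (rule H_seq)
  show "hoare n (66, m) (IF 0) 1"
    using G_regs[OF g] f
    apply -
    apply (rule H_stepN, simp, simp, simp)+
    apply (rule H_done)
     apply simp
    using g f by (simp add: IF_def Wa_def)
next
  fix c :: config assume "IF 0 c"
  then show "hoare n c (\<lambda>c. fst c = 111 \<and> snd c 0 = int (card (Bset k u n))) (Suc n * (20*n + 40))"
  proof (rule H_loop[where I=IF, rotated 2])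
    fix j and c :: config assume a: "j < n" "IF j c"
    show "hoare n c (\<lambda>c'. (fst c' = 111 \<and> snd c' 0 = int (card (Bset k u n))) \<or> IF (Suc j) c') (20*n + 40)"
      using blockF_iter[OF a] by (rule H_mono) auto
  next
    fix c :: config assume I: "IF n c"
    obtain m where c: "c = (67, m)" using I unfolding IF_def by (cases c) auto
    have "hoare n c (\<lambda>c. fst c = 111 \<and> snd c 0 = int (card (Bset k u n))) 3"
      using blockF_exit[of m] I c by simp
    then show "hoare n c (\<lambda>c. fst c = 111 \<and> snd c 0 = int (card (Bset k u n))) (20*n + 40)"
      by (rule H_mono) auto
  qed
qed

definition Ttot :: nat where
  "Ttot = (10 + Suc (length u) * 9 + 15) + (2 + Suc n * 7) + (1 + Suc (length u - 1) * (12*n + 21))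
      + (1 + Suc n * (20*n + 40))"

lemma main_hoare: "hoare n (init k n u) (\<lambda>c. fst c = 111 \<and> snd c 0 = int (B k u n)) Ttot"
proof -
  have "hoare n (init k n u) (\<lambda>c. fst c = 111 \<and> snd c 0 = int (card (Bset k u n))) Ttot"
    unfolding Ttot_def
  proof (rule H_seq)
    show "hoare n (init k n u) (\<lambda>c. fst c = 66 \<and> G (snd c) \<and> PWa (snd c) \<and> EaP (length u - 1) (snd c))
      ((10 + Suc (length u) * 9 + 15) + (2 + Suc n * 7) + (1 + Suc (length u - 1) * (12*n + 21)))"
    proof (rule H_seq)
      show "hoare n (init k n u) (\<lambda>c. fst c = 43 \<and> G (snd c) \<and> PWa (snd c))
        ((10 + Suc (length u) * 9 + 15) + (2 + Suc n * 7))"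
      proof (rule H_seq[OF setup_all])
        fix c :: config assume "fst c = 34 \<and> G (snd c)"
        then show "hoare n c (\<lambda>c. fst c = 43 \<and> G (snd c) \<and> PWa (snd c)) (2 + Suc n * 7)"
          using blockD[of "snd c"] by (cases c) auto
      qed
    next
      fix c :: config assume "fst c = 43 \<and> G (snd c) \<and> PWa (snd c)"
      then show "hoare n c (\<lambda>c. fst c = 66 \<and> G (snd c) \<and> PWa (snd c) \<and> EaP (length u - 1) (snd c))
        (1 + Suc (length u - 1) * (12*n + 21))"
        using blockE[of "snd c"] by (cases c) auto
    qed
  next
    fix c :: config assume "fst c = 66 \<and> G (snd c) \<and> PWa (snd c) \<and> EaP (length u - 1) (snd c)"
    then show "hoare n c (\<lambda>c. fst c = 111 \<and> snd c 0 = int (card (Bset k u n))) (1 + Suc n * (20*n + 40))"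
      using blockF[of "snd c"] unfolding Ea_def by (cases c) auto
  qed
  then show ?thesis using B_Bset[OF un, of k] by simp
qed

lemma Ttot_bound: "Ttot \<le> 400 * n^2"
proof -
  have p: "length u \<le> n" by (rule un)
  have a1: "Suc (length u) * 9 \<le> Suc n * 9" using p by simp
  have a2: "Suc (length u - 1) * (12*n + 21) \<le> Suc n * (12*n + 21)" using p by (intro mult_le_mono1) simp
  have "Ttot \<le> 29 + Suc n * 9 + Suc n * 7 + Suc n * (12*n + 21) + Suc n * (20*n + 40)"
    unfolding Ttot_def using a1 a2 by linarith
  also have "\<dots> = 32*(n*n) + 109*n + 106" by (simp add: algebra_simps)
  also have "\<dots> \<le> 400 * n^2"
  proof -
    have "n \<le> n*n" "1 \<le> n*n" using n1 by (simp_all add: mult_le_mono)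
    then show ?thesis unfolding power2_eq_square by linarith
  qed
  finally show ?thesis .
qed

end

theorem theorem6:
  shows "\<exists>(P :: instr list) (c :: nat). \<forall>k n u.
           n \<ge> 1 \<longrightarrow> k \<ge> 2 \<longrightarrow> length u \<le> n \<longrightarrow> set u \<subseteq> {1..k} \<longrightarrow>
           (\<exists>t \<le> c * n^2.
              halted P (run P t (init k n u)) \<and>
              snd (run P t (init k n u)) 0 = int (B k u n) \<and>
              (\<forall>s \<le> t. \<forall>a \<ge> c * n. snd (run P s (init k n u)) a = 0))"
proof -
  have "\<forall>k n u.
           n \<ge> 1 \<longrightarrow> k \<ge> 2 \<longrightarrow> length u \<le> n \<longrightarrow> set u \<subseteq> {1..k} \<longrightarrow>
           (\<exists>t \<le> 400 * n^2.
              halted prog (run prog t (init k n u)) \<and>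
              snd (run prog t (init k n u)) 0 = int (B k u n) \<and>
              (\<forall>s \<le> t. \<forall>a \<ge> 400 * n. snd (run prog s (init k n u)) a = 0))"
  proof (intro allI impI)
    fix k n :: nat and u :: "nat list"
    assume a: "n \<ge> 1" "k \<ge> 2" "length u \<le> n" "set u \<subseteq> {1..k}"
    interpret ctx k n u using a by unfold_locales auto
    obtain t where t: "t \<le> Ttot" "fst (run prog t (init k n u)) = 111"
      "snd (run prog t (init k n u)) 0 = int (B k u n)"
      "\<forall>s\<le>t. bnd n (snd (run prog s (init k n u)))"
      using main_hoare unfolding hoare_def by blast
    show "\<exists>t \<le> 400 * n^2.
              halted prog (run prog t (init k n u)) \<and>
              snd (run prog t (init k n u)) 0 = int (B k u n) \<and>
              (\<forall>s \<le> t. \<forall>a \<ge> 400 * n. snd (run prog s (init k n u)) a = 0)"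
    proof (intro exI conjI)
      show "t \<le> 400 * n^2" using t(1) Ttot_bound by simp
      show "halted prog (run prog t (init k n u))" unfolding halted_def using t(2) by simp
      show "snd (run prog t (init k n u)) 0 = int (B k u n)" by (rule t(3))
      show "\<forall>s \<le> t. \<forall>a \<ge> 400 * n. snd (run prog s (init k n u)) a = 0"
        using t(4) unfolding bnd_def by auto
    qed
  qed
  then show ?thesis by blast
qed


end
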